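(* Let $S$ be an average $\tau$-mutation system over $\mathcal{A}=\{a_0,\dots,a_{d-1}\}$ with $\tau>1$, fix $k$, and let the starting word $w$ have length $m\ge k$. Assume $\tau+k-1=\rho(\mathbf{M}^{(k)})$ is an eigenvalue of $\mathbf{M}^{(k)}$ of algebraic multiplicity one. Let $\lambda=\lambda_r+\mathrm{i}\lambda_c$ ($\lambda_r,\lambda_c\in\mathbb{R}$) be an eigenvalue of $\mathbf{M}^{(k)}$ with $\lambda\neq\tau+k-1$, and let $\mathbf{u}=\mathbf{u}_r+\mathrm{i}\mathbf{u}_c$ be a left eigenvector of $\mathbf{M}^{(k)}$ for $\lambda$ ($\mathbf{u}_r,\mathbf{u}_c$ real). Define $X_n=\mathbf{u}_r\cdot\mathbf{ct}^{(k)}_{S(n)}+\mathrm{i}\,\mathbf{u}_c\cdot\mathbf{ct}^{(k)}_{S(n)}$. Then \[\frac{X_n}{n(\tau-1)+m}\xrightarrow{\ P\ }0\quad(n\to\infty).\]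
   Context: Let $\mathcal{A}^\star$ be the finite nonempty words over $\mathcal{A}$. A mutation law assigns to each $a_t$ a finitely supported probability distribution $\mathbb{P}_{a_t}$ on $\mathcal{A}^\star$; $\vartheta(a_t)$ is a random word with law $\mathbb{P}_{a_t}$; average $\tau$-mutation law: $\mathbb{E}|\vartheta(a_t)|=\tau$ for all $t$. A mutation step on $w=w_0\cdots w_{m-1}$ picks $i$ uniformly in $\{0,\dots,m-1\}$ and replaces $w_i$ by an independent sample of $\vartheta(w_i)$; $S(0)=w$, $S(n)=\vartheta(S(n-1))$ with independent randomness each step. $\mathrm{ct}_v(u)$ is the number of $i\in\{0,\dots,|v|-1\}$ with $v_i\cdots v_{i+|u|-1}=u$ (cyclic mod $|v|$); $\mathbf{ct}^{(k)}_v=(\mathrm{ct}_v(u))_{u\in\mathcal{A}^k}$. The $k$-substitution matrix: \[\mathbf{M}^{(k)}_{u,v}=\sum_{l\ge1}\sum_{\eta\in\mathcal{A}^l}\sum_{t\in[d]}\Pr(\vartheta(a_t)=\eta)\Big(\sum_{j=1}^{k-1}\mathbb{1}[v_j=a_t]\,\mathbb{1}\big[(v_0\cdots v_{j-1}\eta v_{j+1}\cdots v_{k-1})_{[k]}=u\big]+\sum_{j=0}^{l-1}\mathbb{1}[v_0=a_t]\,\mathbb{1}\big[(\eta v_1\cdots v_{k-1})_{j+[k]}=u\big]\Big),\] where $x_{j+[k]}=x_j\cdots x_{j+k-1}$ and $x_{[k]}$ is the first $k$ symbols of $x$; its spectral radius is $\tau+k-1$. $\xrightarrow{P}$ denotes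 convergence in probability. *)

theory Defs
  imports "HOL-Probability.Probability_Mass_Function" "Jordan_Normal_Form.Char_Poly"
begin

definition mutation_law :: "('a \<Rightarrow> 'a list pmf) \<Rightarrow> bool" where
  "mutation_law P \<longleftrightarrow> (\<forall>a. finite (set_pmf (P a)) \<and> [] \<notin> set_pmf (P a))"

definition avg_mutation_law :: "('a \<Rightarrow> 'a list pmf) \<Rightarrow> real \<Rightarrow> bool" where
  "avg_mutation_law P \<tau> \<longleftrightarrow> mutation_law P \<and>
     (\<forall>a. measure_pmf.expectation (P a) (\<lambda>\<eta>. real (length \<eta>)) = \<tau>)"

definition mut_step :: "('a \<Rightarrow> 'a list pmf) \<Rightarrow> 'a list \<Rightarrow> 'a list pmf" where
  "mut_step P w = bind_pmf (pmf_of_set {..<length w})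
      (\<lambda>i. map_pmf (\<lambda>\<eta>. take i w @ \<eta> @ drop (Suc i) w) (P (w ! i)))"

primrec mut_system :: "('a \<Rightarrow> 'a list pmf) \<Rightarrow> 'a list \<Rightarrow> nat \<Rightarrow> 'a list pmf" where
  "mut_system P w 0 = return_pmf w"
| "mut_system P w (Suc n) = bind_pmf (mut_system P w n) (mut_step P)"

definition ct :: "'a list \<Rightarrow> 'a list \<Rightarrow> nat" where
  "ct v u = card {i. i < length v \<and>
      map (\<lambda>j. v ! ((i + j) mod length v)) [0..<length u] = u}"

definition words :: "nat \<Rightarrow> 'a list set" where
  "words k = {xs. length xs = k}"

text \<open>A fixed enumeration of A^k (the spectral data do not depend on the choice).\<close>
definition word_enum :: "nat \<Rightarrow> nat \<Rightarrow> ('a::finite) list" where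
  "word_enum k = (SOME f. bij_betw f {..<card (words k :: 'a list set)} (words k))"

definition subst_entry :: "('a::finite \<Rightarrow> 'a list pmf) \<Rightarrow> nat \<Rightarrow> 'a list \<Rightarrow> 'a list \<Rightarrow> real" where
  "subst_entry P k u v =
     (\<Sum>a\<in>UNIV. \<Sum>\<eta>\<in>set_pmf (P a). pmf (P a) \<eta> *
        ((\<Sum>j\<in>{1..<k}. (if v ! j = a then 1 else 0) *
             (if take k (take j v @ \<eta> @ drop (Suc j) v) = u then 1 else 0))
         + (\<Sum>j<length \<eta>. (if v ! 0 = a then 1 else 0) *
             (if take k (drop j (\<eta> @ drop 1 v)) = u then 1 else 0))))"

definition subst_matrix :: "('a::finite \<Rightarrow> 'a list pmf) \<Rightarrow> nat \<Rightarrow> complex mat" where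
  "subst_matrix P k = mat (card (words k :: 'a list set)) (card (words k :: 'a list set))
     (\<lambda>(i, j). complex_of_real (subst_entry P k (word_enum k i) (word_enum k j)))"

definition alg_mult :: "complex mat \<Rightarrow> complex \<Rightarrow> nat" where
  "alg_mult A x = order x (char_poly A)"

definition left_eigenvector :: "complex mat \<Rightarrow> complex vec \<Rightarrow> complex \<Rightarrow> bool" where
  "left_eigenvector A u x \<longleftrightarrow> eigenvector (transpose_mat A) u x"

definition X_stat :: "nat \<Rightarrow> complex vec \<Rightarrow> ('a::finite) list \<Rightarrow> complex" where
  "X_stat k u v =
     complex_of_real (\<Sum>i<dim_vec u. Re (u $ i) * real (ct v (word_enum k i)))
     + \<i> * complex_of_real (\<Sum>i<dim_vec u. Im (u $ i) * real (ct v (word_enum k i)))"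

end

theory Submission
  imports Defs
begin

definition win :: "nat \<Rightarrow> 'a list \<Rightarrow> nat \<Rightarrow> 'a list" where
  "win k z p = map (\<lambda>j. z ! ((p + j) mod length z)) [0..<k]"

definition FF :: "nat \<Rightarrow> ('a list \<Rightarrow> complex) \<Rightarrow> 'a list \<Rightarrow> complex" where
  "FF k U z = (\<Sum>p<length z. U (win k z p))"

lemma length_win[simp]: "length (win k z p) = k"
  by (simp add: win_def)

lemma nth_win: "j < k \<Longrightarrow> win k z p ! j = z ! ((p + j) mod length z)"
  by (simp add: win_def)

lemma win_mod: "win k z (p mod length z) = win k z p"
  unfolding win_def by (simp add: mod_add_left_eq)

lemma win_period: "win k z (p + length z) = win k z p"
  by (metis mod_add_self2 win_mod)

lemma sum_split_lessThan: "(\<Sum>i<m+n. f i) = (\<Sum>i<m. f i) + (\<Sum>i<n. f (m+i))" for m n :: nat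
  by (induction n) (auto simp: add.assoc)

lemma sum_periodic_shift:
  fixes c :: nat and F :: "nat \<Rightarrow> 'b::ab_group_add"
  assumes per: "\<And>p. F (p + L) = F p"
  shows "(\<Sum>p<L. F (c + p)) = (\<Sum>p<L. F p)"
proof (induction c)
  case 0 then show ?case by simp
next
  case (Suc c)
  have A: "F c + (\<Sum>p<L. F (Suc (c + p))) = (\<Sum>p<L. F (c + p)) + F (c + L)"
    using sum.lessThan_Suc_shift[of "\<lambda>p. F (c + p)" L] sum.lessThan_Suc[of "\<lambda>p. F (c + p)" L]
    by simp
  have "(\<Sum>p<L. F (Suc c + p)) = (\<Sum>p<L. F (c + p))"
    using A per[of c] by (simp add: algebra_simps)
  then show ?case using Suc by simp
qed

lemma sum_win_shift:
  "(\<Sum>p<length z. g (win k z (c + p))) = (\<Sum>p<length z. g (win k z p))"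
  for g :: "'a list \<Rightarrow> 'b::ab_group_add"
  by (rule sum_periodic_shift[where F = "\<lambda>p. g (win k z p)"]) (simp add: win_period)

lemma win_rotate: "z \<noteq> [] \<Longrightarrow> win k (rotate i z) p = win k z (i + p)"
  unfolding win_def
  by (auto simp: nth_rotate mod_add_right_eq add.assoc)

lemma FF_rotate: "FF k U (rotate i z) = FF k U z"
proof (cases "z = []")
  case True then show ?thesis by simp
next
  case False
  then show ?thesis unfolding FF_def
    using sum_win_shift[where g=U and z=z and k=k and c=i] by (simp add: win_rotate)
qed

lemma sum_tail_reindex:
  "(\<Sum>i<k - 1. f (n + i)) = (\<Sum>j\<in>{1..<k}. f (n + k - 1 - j))" for k n :: nat
  apply (rule sum.reindex_bij_witness[where i = "\<lambda>j. k - 1 - j" and j = "\<lambda>i. k - 1 - i"])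
  apply (auto intro!: arg_cong[where f=f])
  done

lemma mod_between: "n \<le> x \<Longrightarrow> x < 2 * n \<Longrightarrow> x mod n = x - n" for n x :: nat
  by (simp add: le_mod_geq)

context
  fixes k :: nat and a :: 'a and w \<eta> :: "'a list"
  assumes k1: "1 \<le> k" and kw: "k \<le> Suc (length w)" and eta: "\<eta> \<noteq> []"
begin

lemma decA1:
  assumes "p < length \<eta>"
  shows "win k (\<eta> @ w) p = take k (drop p (\<eta> @ drop 1 (win k (a # w) 0)))"
proof (rule nth_equalityI)
  show "length (win k (\<eta> @ w) p) = length (take k (drop p (\<eta> @ drop 1 (win k (a # w) 0))))"
    using assms k1 by simp
next
  fix t assume t: "t < length (win k (\<eta> @ w) p)"
  then have tk: "t < k" by simp
  have lt: "p + t < length \<eta> + length w" using assms tk kw by linarith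
  show "win k (\<eta> @ w) p ! t = take k (drop p (\<eta> @ drop 1 (win k (a # w) 0))) ! t"
  proof (cases "p + t < length \<eta>")
    case True
    then have "t < length \<eta> - p" by linarith
    then show ?thesis using tk lt True by (simp add: nth_win nth_append)
  next
    case False
    have "Suc (p + t - length \<eta>) < Suc (length w)" using lt False by linarith
    moreover have "Suc (p + t - length \<eta>) \<le> t" using False assms by linarith
    moreover have "\<not> t < length \<eta> - p" using False by linarith
    moreover have "t + p - length \<eta> = p + t - length \<eta>" by simp
    ultimately show ?thesis using tk lt False
      by (simp add: nth_win nth_append)
  qed
qed

lemma decA2:
  assumes "q < Suc (length w) - k"
  shows "win k (\<eta> @ w) (length \<eta> + q) = win k (a # w) (Suc q)"
proof (rule nth_equalityI)
  fix t assume t: "t < length (win k (\<eta> @ w) (length \<eta> + q))"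
  then have tk: "t < k" by simp
  have lt: "q + t < length w" using assms tk by linarith
  then show "win k (\<eta> @ w) (length \<eta> + q) ! t = win k (a # w) (Suc q) ! t"
    using tk by (simp add: nth_win nth_append add.assoc)
qed simp

lemma decA3:
  assumes j: "j \<in> {1..<k}"
  defines "y \<equiv> win k (a # w) (Suc (length w) - j)"
  shows "win k (\<eta> @ w) (length \<eta> + length w - j) = take k (take j y @ \<eta> @ drop (Suc j) y)"
    and "y ! j = a"
proof -
  have jk: "1 \<le> j" "j < k" using j by auto
  show "y ! j = a" unfolding y_def using jk kw by (simp add: nth_win)
  show "win k (\<eta> @ w) (length \<eta> + length w - j) = take k (take j y @ \<eta> @ drop (Suc j) y)"
  proof (rule nth_equalityI)
    show "length (win k (\<eta> @ w) (length \<eta> + length w - j)) = length (take k (take j y @ \<eta> @ drop (Suc j) y))"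
    proof -
      have "k \<le> length (take j y @ \<eta> @ drop (Suc j) y)" using jk eta unfolding y_def
        by (cases \<eta>) auto
      then show ?thesis by simp
    qed
  next
    fix t assume t: "t < length (win k (\<eta> @ w) (length \<eta> + length w - j))"
    then have tk: "t < k" by simp
    consider (a) "t < j" | (b) "j \<le> t" "t - j < length \<eta>" | (c) "j \<le> t" "length \<eta> \<le> t - j" by linarith
    then show "win k (\<eta> @ w) (length \<eta> + length w - j) ! t = take k (take j y @ \<eta> @ drop (Suc j) y) ! t"
    proof cases
      case a
      have e1: "(length \<eta> + length w - j + t) mod (length \<eta> + length w) = length \<eta> + (length w - j + t)"
        using a jk kw by simp
      have e2: "(Suc (length w) - j + t) mod Suc (length w) = Suc (length w - j + t)"
        using a jk kw by simp
      have "\<not> (length \<eta> + length w + t - j < length \<eta>)" using a jk kw by linarith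
      then show ?thesis using a tk jk kw unfolding y_def
        by (simp add: nth_win nth_append e1 e2)
    next
      case b
      have e1: "(length \<eta> + length w - j + t) mod (length \<eta> + length w) = t - j"
        using b jk kw eta by (subst mod_between) auto
      have e1': "(length \<eta> + length w + t - j) mod (length \<eta> + length w) = t - j"
        using b jk kw eta by (subst mod_between) auto
      have "t - j < k - j" using b tk by linarith
      then show ?thesis using b tk jk kw unfolding y_def
        by (simp add: nth_win nth_append e1 e1')
    next
      case c
      have e1: "(length \<eta> + length w - j + t) mod (length \<eta> + length w) = t - j"
        using c jk kw eta tk by (subst mod_between) auto
      have e1': "(length \<eta> + length w + t - j) mod (length \<eta> + length w) = t - j"
        using c jk kw eta tk by (subst mod_between) auto
      have e2: "(Suc (length w) - j + (Suc j + (t - j - length \<eta>))) mod Suc (length w) = Suc (t - j - length \<eta>)"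
        using c jk kw tk by (subst mod_between) auto
      have "length \<eta> \<ge> 1" using eta by (cases \<eta>) auto
      then have sk: "Suc j + (t - j - length \<eta>) < k" "Suc (t - length \<eta>) < k" using c tk by linarith+
      have e3: "(Suc (Suc (length w + t) - (j + length \<eta>))) mod Suc (length w) = Suc (t - (j + length \<eta>))"
        using c jk kw tk by (subst mod_between) auto
      show ?thesis using sk c tk jk kw unfolding y_def
        by (simp add: nth_win nth_append e1 e1' e2 e3)
    qed
  qed
qed

end

definition Tw :: "nat \<Rightarrow> nat \<Rightarrow> 'a list \<Rightarrow> 'a list \<Rightarrow> 'a list" where
  "Tw k j \<eta> y = take k (take j y @ \<eta> @ drop (Suc j) y)"

definition Sw :: "nat \<Rightarrow> nat \<Rightarrow> 'a list \<Rightarrow> 'a list \<Rightarrow> 'a list" where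
  "Sw k p \<eta> y = take k (drop p (\<eta> @ drop 1 y))"

lemma FF_decomp_new:
  assumes k1: "1 \<le> k" and kw: "k \<le> Suc (length w)" and eta: "\<eta> \<noteq> []"
  shows "FF k U (\<eta> @ w) =
    (\<Sum>p<length \<eta>. U (Sw k p \<eta> (win k (a # w) 0)))
    + (\<Sum>q<Suc (length w) - k. U (win k (a # w) (Suc q)))
    + (\<Sum>j\<in>{1..<k}. U (Tw k j \<eta> (win k (a # w) (Suc (length w) - j))))"
proof -
  have len: "length (\<eta> @ w) = length \<eta> + (Suc (length w) - k) + (k - 1)"
    using k1 kw by simp
  have "FF k U (\<eta> @ w) = (\<Sum>p<length \<eta>. U (win k (\<eta> @ w) p))
      + (\<Sum>q<Suc (length w) - k. U (win k (\<eta> @ w) (length \<eta> + q)))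
      + (\<Sum>i<k - 1. U (win k (\<eta> @ w) (length \<eta> + (Suc (length w) - k) + i)))"
    unfolding FF_def len sum_split_lessThan by simp
  also have "(\<Sum>p<length \<eta>. U (win k (\<eta> @ w) p)) = (\<Sum>p<length \<eta>. U (Sw k p \<eta> (win k (a # w) 0)))"
    by (rule sum.cong, simp, subst decA1[OF k1 kw eta], auto simp: Sw_def)
  also have "(\<Sum>q<Suc (length w) - k. U (win k (\<eta> @ w) (length \<eta> + q))) =
      (\<Sum>q<Suc (length w) - k. U (win k (a # w) (Suc q)))"
    by (rule sum.cong) (auto simp: decA2[OF k1 kw eta, where a=a])
  also have "(\<Sum>i<k - 1. U (win k (\<eta> @ w) (length \<eta> + (Suc (length w) - k) + i))) =
      (\<Sum>j\<in>{1..<k}. U (win k (\<eta> @ w) (length \<eta> + (Suc (length w) - k) + k - 1 - j)))"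
    by (rule sum_tail_reindex)
  also have "\<dots> = (\<Sum>j\<in>{1..<k}. U (Tw k j \<eta> (win k (a # w) (Suc (length w) - j))))"
  proof (rule sum.cong)
    fix j assume j: "j \<in> {1..<k}"
    have "length \<eta> + (Suc (length w) - k) + k - 1 - j = length \<eta> + length w - j"
      using j kw by auto
    then show "U (win k (\<eta> @ w) (length \<eta> + (Suc (length w) - k) + k - 1 - j)) =
        U (Tw k j \<eta> (win k (a # w) (Suc (length w) - j)))"
      using decA3(1)[OF k1 kw eta j] by (simp add: Tw_def)
  qed simp
  finally show ?thesis .
qed

lemma FF_decomp_old:
  assumes k1: "1 \<le> k" and kw: "k \<le> Suc (length w)"
  shows "FF k U (a # w) = U (win k (a # w) 0)
    + (\<Sum>q<Suc (length w) - k. U (win k (a # w) (Suc q)))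
    + (\<Sum>j\<in>{1..<k}. U (win k (a # w) (Suc (length w) - j)))"
proof -
  have len: "length (a # w) = 1 + (Suc (length w) - k) + (k - 1)"
    using k1 kw by simp
  have "FF k U (a # w) = (\<Sum>p<1. U (win k (a # w) p))
      + (\<Sum>q<Suc (length w) - k. U (win k (a # w) (1 + q)))
      + (\<Sum>i<k - 1. U (win k (a # w) (1 + (Suc (length w) - k) + i)))"
    unfolding FF_def len sum_split_lessThan by simp
  also have "(\<Sum>i<k - 1. U (win k (a # w) (1 + (Suc (length w) - k) + i))) =
      (\<Sum>j\<in>{1..<k}. U (win k (a # w) (1 + (Suc (length w) - k) + k - 1 - j)))"
    by (rule sum_tail_reindex)
  also have "\<dots> = (\<Sum>j\<in>{1..<k}. U (win k (a # w) (Suc (length w) - j)))"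
  proof (rule sum.cong)
    fix j assume j: "j \<in> {1..<k}"
    have "1 + (Suc (length w) - k) + k - 1 - j = Suc (length w) - j"
      using j kw by auto
    then show "U (win k (a # w) (1 + (Suc (length w) - k) + k - 1 - j)) =
        U (win k (a # w) (Suc (length w) - j))" by simp
  qed simp
  finally show ?thesis by simp
qed

lemma FF_delta:
  assumes k1: "1 \<le> k" and kw: "k \<le> Suc (length w)" and eta: "\<eta> \<noteq> []"
  shows "FF k U (\<eta> @ w) - FF k U (a # w) =
    (\<Sum>p<length \<eta>. U (Sw k p \<eta> (win k (a # w) 0))) - U (win k (a # w) 0)
    + (\<Sum>j\<in>{1..<k}. U (Tw k j \<eta> (win k (a # w) (Suc (length w) - j)))
         - U (win k (a # w) (Suc (length w) - j)))"
  unfolding FF_decomp_new[OF assms, of U a] FF_decomp_old[OF k1 kw, of U a]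
  by (simp add: sum_subtractf algebra_simps)

lemma rotate_mut:
  assumes "i < length v" and eta: "\<eta> \<noteq> []"
  shows "rotate i (take i v @ \<eta> @ drop (Suc i) v) = \<eta> @ (drop (Suc i) v @ take i v)"
    and "rotate i v = v ! i # (drop (Suc i) v @ take i v)"
proof -
  have "i mod length (take i v @ \<eta> @ drop (Suc i) v) = i"
    using assms by (cases \<eta>) auto
  then show "rotate i (take i v @ \<eta> @ drop (Suc i) v) = \<eta> @ (drop (Suc i) v @ take i v)"
    using assms by (simp add: rotate_drop_take)
  show "rotate i v = v ! i # (drop (Suc i) v @ take i v)"
    using assms by (simp add: rotate_drop_take Cons_nth_drop_Suc)
qed

lemma FF_mut_delta:
  assumes k1: "1 \<le> k" and kv: "k \<le> length v" and i: "i < length v" and eta: "\<eta> \<noteq> []"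
  shows "FF k U (take i v @ \<eta> @ drop (Suc i) v) - FF k U v =
    (\<Sum>p<length \<eta>. U (Sw k p \<eta> (win k v i))) - U (win k v i)
    + (\<Sum>j\<in>{1..<k}. U (Tw k j \<eta> (win k v (i + (length v - j)))) - U (win k v (i + (length v - j))))"
proof -
  define w where "w = drop (Suc i) v @ take i v"
  have lw: "Suc (length w) = length v" using i by (simp add: w_def)
  have vne: "v \<noteq> []" using i by auto
  have r1: "FF k U (take i v @ \<eta> @ drop (Suc i) v) = FF k U (\<eta> @ w)"
    using FF_rotate[of k U i "take i v @ \<eta> @ drop (Suc i) v"] rotate_mut(1)[OF i eta]
    by (simp add: w_def)
  have r2: "FF k U v = FF k U (v ! i # w)"
    using FF_rotate[of k U i v] rotate_mut(2)[OF i eta] by (simp add: w_def)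
  have wr: "win k (v ! i # w) p = win k v (i + p)" for p
    using win_rotate[OF vne, of k i p] rotate_mut(2)[OF i eta] by (simp add: w_def)
  show ?thesis
    unfolding r1 r2 using FF_delta[OF k1 _ eta, of w U "v ! i"] kv lw
    by (simp add: wr)
qed

definition Ec :: "('a \<Rightarrow> 'a list pmf) \<Rightarrow> 'a \<Rightarrow> ('a list \<Rightarrow> complex) \<Rightarrow> complex" where
  "Ec P a g = (\<Sum>\<eta>\<in>set_pmf (P a). complex_of_real (pmf (P a) \<eta>) * g \<eta>)"

definition GG :: "nat \<Rightarrow> ('a \<Rightarrow> 'a list pmf) \<Rightarrow> ('a list \<Rightarrow> complex) \<Rightarrow> 'a list \<Rightarrow> complex" where
  "GG k P U y = Ec P (y ! 0) (\<lambda>\<eta>. \<Sum>p<length \<eta>. U (Sw k p \<eta> y))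
     + (\<Sum>j\<in>{1..<k}. Ec P (y ! j) (\<lambda>\<eta>. U (Tw k j \<eta> y)))"

lemma Ec_add: "Ec P a (\<lambda>\<eta>. f \<eta> + g \<eta>) = Ec P a f + Ec P a g"
  unfolding Ec_def by (simp add: sum.distrib algebra_simps)

lemma Ec_diff: "Ec P a (\<lambda>\<eta>. f \<eta> - g \<eta>) = Ec P a f - Ec P a g"
  unfolding Ec_def by (simp add: sum_subtractf algebra_simps)

lemma Ec_sum: "Ec P a (\<lambda>\<eta>. \<Sum>j\<in>J. f j \<eta>) = (\<Sum>j\<in>J. Ec P a (f j))"
  unfolding Ec_def by (simp add: sum_distrib_left sum.swap[of _ J])

lemma Ec_const:
  assumes "finite (set_pmf (P a))"
  shows "Ec P a (\<lambda>\<eta>. c) = c"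
proof -
  have "(\<Sum>\<eta>\<in>set_pmf (P a). pmf (P a) \<eta>) = 1"
    using assms by (simp add: sum_pmf_eq_1)
  then have "(\<Sum>\<eta>\<in>set_pmf (P a). complex_of_real (pmf (P a) \<eta>)) = 1"
    by (metis of_real_1 of_real_sum)
  then show ?thesis unfolding Ec_def by (simp add: sum_distrib_right[symmetric])
qed

lemma Ec_cong: "(\<And>\<eta>. \<eta> \<in> set_pmf (P a) \<Longrightarrow> f \<eta> = g \<eta>) \<Longrightarrow> Ec P a f = Ec P a g"
  unfolding Ec_def by (rule sum.cong) auto

lemma win_nth_shift:
  assumes "j < k" "k \<le> length v" "i < length v"
  shows "win k v (i + (length v - j)) ! j = v ! i"
proof -
  have "(i + (length v - j) + j) mod length v = i"
    using assms by (simp add: le_mod_geq)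
  then show ?thesis using assms by (simp add: nth_win)
qed

lemma step_sum:
  assumes k1: "1 \<le> k" and kv: "k \<le> length v"
    and fin: "\<And>a. finite (set_pmf (P a))" and ne: "\<And>a. [] \<notin> set_pmf (P a)"
  shows "(\<Sum>i<length v. Ec P (v ! i) (\<lambda>\<eta>. FF k U (take i v @ \<eta> @ drop (Suc i) v) - FF k U v))
       = (\<Sum>p<length v. GG k P U (win k v p) - of_nat k * U (win k v p))"
proof -
  let ?L = "length v"
  define A0 where "A0 y = Ec P (y ! 0) (\<lambda>\<eta>. \<Sum>p<length \<eta>. U (Sw k p \<eta> y))" for y
  define Aj where "Aj j y = Ec P (y ! j) (\<lambda>\<eta>. U (Tw k j \<eta> y))" for j y
  have per_i: "Ec P (v ! i) (\<lambda>\<eta>. FF k U (take i v @ \<eta> @ drop (Suc i) v) - FF k U v)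
      = A0 (win k v i) - U (win k v i)
        + (\<Sum>j\<in>{1..<k}. Aj j (win k v (i + (?L - j))) - U (win k v (i + (?L - j))))"
    if i: "i < ?L" for i
  proof -
    have "Ec P (v ! i) (\<lambda>\<eta>. FF k U (take i v @ \<eta> @ drop (Suc i) v) - FF k U v)
      = Ec P (v ! i) (\<lambda>\<eta>. ((\<Sum>p<length \<eta>. U (Sw k p \<eta> (win k v i))) - U (win k v i))
        + (\<Sum>j\<in>{1..<k}. U (Tw k j \<eta> (win k v (i + (?L - j)))) - U (win k v (i + (?L - j)))))"
      by (rule Ec_cong, rule FF_mut_delta[OF k1 kv i]) (use ne in blast)
    also have "\<dots> = (Ec P (v ! i) (\<lambda>\<eta>. \<Sum>p<length \<eta>. U (Sw k p \<eta> (win k v i))) - U (win k v i))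
        + (\<Sum>j\<in>{1..<k}. Ec P (v ! i) (\<lambda>\<eta>. U (Tw k j \<eta> (win k v (i + (?L - j))))) - U (win k v (i + (?L - j))))"
      by (simp add: Ec_add Ec_diff Ec_sum Ec_const[OF fin])
    also have "\<dots> = A0 (win k v i) - U (win k v i)
        + (\<Sum>j\<in>{1..<k}. Aj j (win k v (i + (?L - j))) - U (win k v (i + (?L - j))))"
    proof -
      have "(win k v i) ! 0 = v ! i" using k1 kv i by (simp add: nth_win)
      moreover have "(\<Sum>j\<in>{1..<k}. Ec P (v ! i) (\<lambda>\<eta>. U (Tw k j \<eta> (win k v (i + (?L - j))))) - U (win k v (i + (?L - j))))
          = (\<Sum>j\<in>{1..<k}. Aj j (win k v (i + (?L - j))) - U (win k v (i + (?L - j))))"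
        by (rule sum.cong) (use win_nth_shift[OF _ kv i] in \<open>auto simp: Aj_def\<close>)
      ultimately show ?thesis by (simp add: A0_def)
    qed
    finally show ?thesis .
  qed
  have "(\<Sum>i<?L. Ec P (v ! i) (\<lambda>\<eta>. FF k U (take i v @ \<eta> @ drop (Suc i) v) - FF k U v))
      = (\<Sum>i<?L. A0 (win k v i) - U (win k v i)
        + (\<Sum>j\<in>{1..<k}. Aj j (win k v (i + (?L - j))) - U (win k v (i + (?L - j)))))"
    by (rule sum.cong) (auto simp: per_i)
  also have "\<dots> = (\<Sum>i<?L. A0 (win k v i) - U (win k v i))
        + (\<Sum>j\<in>{1..<k}. \<Sum>i<?L. Aj j (win k v ((?L - j) + i)) - U (win k v ((?L - j) + i)))"
  proof -
    have sw: "(\<Sum>i<?L. \<Sum>j\<in>{1..<k}. Aj j (win k v (i + (?L - j))) - U (win k v (i + (?L - j))))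
      = (\<Sum>j\<in>{1..<k}. \<Sum>i<?L. Aj j (win k v (i + (?L - j))) - U (win k v (i + (?L - j))))"
      by (rule sum.swap)
    show ?thesis using sw by (simp add: sum.distrib add.commute)
  qed
  also have "(\<Sum>j\<in>{1..<k}. \<Sum>i<?L. Aj j (win k v ((?L - j) + i)) - U (win k v ((?L - j) + i)))
      = (\<Sum>j\<in>{1..<k}. \<Sum>p<?L. Aj j (win k v p) - U (win k v p))"
    by (rule sum.cong[OF refl], rule sum_win_shift[where g = "\<lambda>y. Aj _ y - U y"])
  also have "(\<Sum>i<?L. A0 (win k v i) - U (win k v i)) + (\<Sum>j\<in>{1..<k}. \<Sum>p<?L. Aj j (win k v p) - U (win k v p))
      = (\<Sum>p<?L. A0 (win k v p) + (\<Sum>j\<in>{1..<k}. Aj j (win k v p)) - (1 + of_nat (k - 1)) * U (win k v p))"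
  proof -
    have sw: "(\<Sum>j\<in>{1..<k}. \<Sum>p<?L. Aj j (win k v p)) = (\<Sum>p<?L. \<Sum>j\<in>{1..<k}. Aj j (win k v p))"
      by (rule sum.swap)
    show ?thesis using sw by (simp add: sum.distrib sum_subtractf algebra_simps sum_distrib_left)
  qed
  also have "\<dots> = (\<Sum>p<?L. GG k P U (win k v p) - of_nat k * U (win k v p))"
    using k1 by (simp add: GG_def A0_def Aj_def of_nat_diff)
  finally show ?thesis .
qed

lemma finite_words: "finite (words k :: ('a::finite) list set)"
proof -
  have "words k = {xs :: 'a list. set xs \<subseteq> UNIV \<and> length xs = k}" by (auto simp: words_def)
  then show ?thesis using finite_lists_length_eq[of "UNIV :: 'a set" k] by simp
qed

lemma Tw_words: "\<eta> \<noteq> [] \<Longrightarrow> j < k \<Longrightarrow> length y = k \<Longrightarrow> Tw k j \<eta> y \<in> words k"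
  by (cases \<eta>) (auto simp: Tw_def words_def)

lemma Sw_words: "p < length \<eta> \<Longrightarrow> 1 \<le> k \<Longrightarrow> length y = k \<Longrightarrow> Sw k p \<eta> y \<in> words k"
  by (auto simp: Sw_def words_def)

lemma L_swap: "(\<Sum>x\<in>X. U x * complex_of_real (\<Sum>i\<in>I. f i x)) = (\<Sum>i\<in>I. \<Sum>x\<in>X. U x * complex_of_real (f i x))"
  by (simp add: of_real_sum sum_distrib_left sum.swap[of _ I])

lemma delta_help:
  assumes "finite W" "T \<in> W"
  shows "(\<Sum>x\<in>W. U x * complex_of_real ((if c then 1 else 0) * (if T = x then 1 else 0))) = (if c then U T else 0)"
  using assms by (cases c) (simp_all add: if_distrib cong: if_cong)

lemma Ec_if: "Ec P a (\<lambda>\<eta>. if c then g \<eta> else 0) = (if c then Ec P a g else 0)"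
  unfolding Ec_def by (cases c) auto

lemma subst_U:
  fixes P :: "'a::finite \<Rightarrow> 'a list pmf"
  assumes k1: "1 \<le> k" and ne: "\<And>a. [] \<notin> set_pmf (P a)" and ly: "length y = k"
  shows "(\<Sum>x\<in>words k. U x * complex_of_real (subst_entry P k x y)) = GG k P U y"
proof -
  define Bt where "Bt a \<eta> x = (\<Sum>j\<in>{1..<k}. (if y ! j = a then 1 else 0) * (if Tw k j \<eta> y = x then 1 else (0::real)))" for a \<eta> x
  define Bs where "Bs a \<eta> x = (\<Sum>j<length \<eta>. (if y ! 0 = a then 1 else 0) * (if Sw k j \<eta> y = x then 1 else (0::real)))" for a \<eta> x
  have se: "subst_entry P k x y = (\<Sum>a\<in>UNIV. \<Sum>\<eta>\<in>set_pmf (P a). pmf (P a) \<eta> * (Bt a \<eta> x + Bs a \<eta> x))" for x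
    unfolding subst_entry_def Bt_def Bs_def Tw_def Sw_def by simp
  have inner: "(\<Sum>x\<in>words k. U x * complex_of_real (pmf (P a) \<eta> * (Bt a \<eta> x + Bs a \<eta> x)))
      = complex_of_real (pmf (P a) \<eta>) * ((\<Sum>j\<in>{1..<k}. if y ! j = a then U (Tw k j \<eta> y) else 0)
          + (\<Sum>p<length \<eta>. if y ! 0 = a then U (Sw k p \<eta> y) else 0))"
    if eta: "\<eta> \<in> set_pmf (P a)" for a \<eta>
  proof -
    have etne: "\<eta> \<noteq> []" using ne eta by blast
    have "(\<Sum>x\<in>words k. U x * complex_of_real (pmf (P a) \<eta> * (Bt a \<eta> x + Bs a \<eta> x)))
        = complex_of_real (pmf (P a) \<eta>) * ((\<Sum>x\<in>words k. U x * complex_of_real (Bt a \<eta> x))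
           + (\<Sum>x\<in>words k. U x * complex_of_real (Bs a \<eta> x)))"
      by (simp add: sum_distrib_left sum.distrib algebra_simps)
    also have "(\<Sum>x\<in>words k. U x * complex_of_real (Bt a \<eta> x)) = (\<Sum>j\<in>{1..<k}. if y ! j = a then U (Tw k j \<eta> y) else 0)"
      unfolding Bt_def L_swap
      by (rule sum.cong[OF refl], rule delta_help[OF finite_words Tw_words[OF etne _ ly]]) auto
    also have "(\<Sum>x\<in>words k. U x * complex_of_real (Bs a \<eta> x)) = (\<Sum>p<length \<eta>. if y ! 0 = a then U (Sw k p \<eta> y) else 0)"
      unfolding Bs_def L_swap
      by (rule sum.cong[OF refl], rule delta_help[OF finite_words Sw_words[OF _ k1 ly]]) auto
    finally show ?thesis .
  qed
  have "(\<Sum>x\<in>words k. U x * complex_of_real (subst_entry P k x y))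
      = (\<Sum>a\<in>UNIV. Ec P a (\<lambda>\<eta>. (\<Sum>j\<in>{1..<k}. if y ! j = a then U (Tw k j \<eta> y) else 0)
          + (\<Sum>p<length \<eta>. if y ! 0 = a then U (Sw k p \<eta> y) else 0)))"
    unfolding se L_swap Ec_def
    by (rule sum.cong[OF refl], rule sum.cong[OF refl], rule inner) auto
  also have "\<dots> = (\<Sum>a\<in>UNIV. (\<Sum>j\<in>{1..<k}. if y ! j = a then Ec P a (\<lambda>\<eta>. U (Tw k j \<eta> y)) else 0)
          + (if y ! 0 = a then Ec P a (\<lambda>\<eta>. \<Sum>p<length \<eta>. U (Sw k p \<eta> y)) else 0))"
  proof (rule sum.cong[OF refl])
    fix a
    have e1: "(\<lambda>\<eta>. \<Sum>p<length \<eta>. if y ! 0 = a then U (Sw k p \<eta> y) else 0)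
        = (\<lambda>\<eta>. if y ! 0 = a then (\<Sum>p<length \<eta>. U (Sw k p \<eta> y)) else 0)"
      by auto
    show "Ec P a (\<lambda>\<eta>. (\<Sum>j\<in>{1..<k}. if y ! j = a then U (Tw k j \<eta> y) else 0)
          + (\<Sum>p<length \<eta>. if y ! 0 = a then U (Sw k p \<eta> y) else 0))
        = (\<Sum>j\<in>{1..<k}. if y ! j = a then Ec P a (\<lambda>\<eta>. U (Tw k j \<eta> y)) else 0)
          + (if y ! 0 = a then Ec P a (\<lambda>\<eta>. \<Sum>p<length \<eta>. U (Sw k p \<eta> y)) else 0)"
      unfolding Ec_add Ec_sum e1 Ec_if ..
  qed
  also have "\<dots> = (\<Sum>j\<in>{1..<k}. Ec P (y ! j) (\<lambda>\<eta>. U (Tw k j \<eta> y)))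
          + Ec P (y ! 0) (\<lambda>\<eta>. \<Sum>p<length \<eta>. U (Sw k p \<eta> y))"
  proof -
    have sw: "(\<Sum>a\<in>UNIV. \<Sum>j\<in>{1..<k}. if y ! j = a then Ec P a (\<lambda>\<eta>. U (Tw k j \<eta> y)) else 0)
        = (\<Sum>j\<in>{1..<k}. \<Sum>a\<in>UNIV. if y ! j = a then Ec P a (\<lambda>\<eta>. U (Tw k j \<eta> y)) else 0)"
      by (rule sum.swap)
    show ?thesis using sw by (simp add: sum.distrib sum.delta)
  qed
  also have "\<dots> = GG k P U y" by (simp add: GG_def)
  finally show ?thesis .
qed

lemma word_enum_bij:
  "bij_betw (word_enum k :: nat \<Rightarrow> ('a::finite) list) {..<card (words k :: 'a list set)} (words k)"
proof -
  have fw: "finite (words k :: 'a list set)" by (rule finite_words)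
  have "\<exists>f. bij_betw (f :: nat \<Rightarrow> 'a list) {..<card (words k :: 'a list set)} (words k)"
    using ex_bij_betw_nat_finite[OF fw] by (simp add: atLeast0LessThan)
  then show ?thesis unfolding word_enum_def by (rule someI_ex)
qed

definition Uf :: "nat \<Rightarrow> complex vec \<Rightarrow> ('a::finite) list \<Rightarrow> complex" where
  "Uf k u x = (if x \<in> words k then u $ (inv_into {..<card (words k :: 'a list set)} (word_enum k) x) else 0)"

lemma Uf_enum:
  fixes dummy :: "'a::finite"
  assumes "i < card (words k :: 'a list set)"
  shows "Uf k u (word_enum k i :: 'a list) = u $ i"
proof -
  have b: "bij_betw (word_enum k :: nat \<Rightarrow> 'a list) {..<card (words k :: 'a list set)} (words k)" by (rule word_enum_bij)
  have "word_enum k i \<in> (words k :: 'a list set)" using b assms by (auto dest: bij_betwE)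
  moreover have "inv_into {..<card (words k :: 'a list set)} (word_enum k) (word_enum k i :: 'a list) = i"
    using b assms by (simp add: bij_betw_inv_into_left)
  ultimately show ?thesis by (simp add: Uf_def)
qed

lemma ct_win:
  assumes "x \<in> words k"
  shows "ct v x = card {p \<in> {..<length v}. win k v p = x}"
proof -
  have "length x = k" using assms by (simp add: words_def)
  then show ?thesis unfolding ct_def win_def by (intro arg_cong[where f=card]) auto
qed

lemma X_stat_FF:
  fixes v :: "('a::finite) list"
  assumes du: "dim_vec u = card (words k :: 'a list set)"
  shows "X_stat k u v = FF k (Uf k u) v"
proof -
  let ?N = "card (words k :: 'a list set)"
  let ?e = "word_enum k :: nat \<Rightarrow> 'a list"
  have "X_stat k u v = (\<Sum>i<?N. u $ i * of_nat (ct v (?e i)))"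
  proof -
    have t: "complex_of_real (Re z * c) + \<i> * complex_of_real (Im z * c) = z * of_real c" for z c
      by (simp add: complex_eq_iff)
    have "X_stat k u v = (\<Sum>i<?N. complex_of_real (Re (u $ i) * real (ct v (?e i))))
       + \<i> * (\<Sum>i<?N. complex_of_real (Im (u $ i) * real (ct v (?e i))))"
      unfolding X_stat_def du by (simp only: of_real_sum)
    also have "\<dots> = (\<Sum>i<?N. complex_of_real (Re (u $ i) * real (ct v (?e i)))
       + \<i> * complex_of_real (Im (u $ i) * real (ct v (?e i))))"
      by (simp only: sum_distrib_left sum.distrib)
    also have "\<dots> = (\<Sum>i<?N. u $ i * of_nat (ct v (?e i)))"
      by (rule sum.cong[OF refl]) (simp only: t of_real_of_nat_eq)
    finally show ?thesis .
  qed
  also have "\<dots> = (\<Sum>i<?N. Uf k u (?e i) * of_nat (ct v (?e i)))"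
    by (rule sum.cong) (auto simp: Uf_enum)
  also have "\<dots> = (\<Sum>x\<in>words k. Uf k u x * of_nat (ct v x))"
    by (rule sum.reindex_bij_betw[OF word_enum_bij, where g = "\<lambda>x. Uf k u x * of_nat (ct v x)"])
  also have "\<dots> = (\<Sum>x\<in>words k. \<Sum>p\<in>{p \<in> {..<length v}. win k v p = x}. Uf k u (win k v p))"
    by (rule sum.cong) (auto simp: ct_win)
  also have "\<dots> = (\<Sum>p<length v. Uf k u (win k v p))"
    by (rule sum.group[OF _ finite_words]) (auto simp: words_def)
  finally show ?thesis by (simp add: FF_def)
qed

lemma eig_GG:
  fixes P :: "'a::finite \<Rightarrow> 'a list pmf"
  assumes k1: "1 \<le> k" and ne: "\<And>a. [] \<notin> set_pmf (P a)"
    and ev: "left_eigenvector (subst_matrix P k) u lam"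
    and y: "y \<in> words k"
  shows "GG k P (Uf k u) y = lam * Uf k u y"
proof -
  let ?N = "card (words k :: 'a list set)"
  let ?e = "word_enum k :: nat \<Rightarrow> 'a list"
  let ?A = "subst_matrix P k"
  have dA: "dim_row ?A = ?N" "dim_col ?A = ?N" by (simp_all add: subst_matrix_def)
  have uc: "u \<in> carrier_vec ?N" and eq: "transpose_mat ?A *\<^sub>v u = lam \<cdot>\<^sub>v u"
    using ev dA by (auto simp: left_eigenvector_def eigenvector_def)
  have du: "dim_vec u = ?N" using uc by simp
  have b: "bij_betw ?e {..<?N} (words k)" by (rule word_enum_bij)
  obtain j where j: "j < ?N" and yj: "y = ?e j"
  proof -
    have "y \<in> ?e ` {..<?N}" using b y by (simp add: bij_betw_def)
    then show ?thesis using that by auto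
  qed
  have "(transpose_mat ?A *\<^sub>v u) $ j = lam * u $ j" using eq j du by simp
  moreover have "(transpose_mat ?A *\<^sub>v u) $ j = (\<Sum>i<?N. complex_of_real (subst_entry P k (?e i) (?e j)) * u $ i)"
    using j dA du by (simp add: scalar_prod_def atLeast0LessThan subst_matrix_def)
  ultimately have s: "(\<Sum>i<?N. complex_of_real (subst_entry P k (?e i) (?e j)) * u $ i) = lam * u $ j" by simp
  have "(\<Sum>x\<in>words k. Uf k u x * complex_of_real (subst_entry P k x y))
      = (\<Sum>i<?N. Uf k u (?e i) * complex_of_real (subst_entry P k (?e i) y))"
    by (rule sum.reindex_bij_betw[OF b, symmetric])
  also have "\<dots> = lam * u $ j" unfolding yj s[symmetric]
    by (rule sum.cong) (auto simp: Uf_enum)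
  finally have "(\<Sum>x\<in>words k. Uf k u x * complex_of_real (subst_entry P k x y)) = lam * Uf k u y"
    using Uf_enum[OF j] yj by simp
  moreover have "length y = k" using y by (simp add: words_def)
  ultimately show ?thesis using subst_U[OF k1 ne, of y "Uf k u"] by simp
qed

lemma Ec_norm_le:
  assumes fin: "finite (set_pmf (P a))" and b: "\<And>\<eta>. \<eta> \<in> set_pmf (P a) \<Longrightarrow> cmod (g \<eta>) \<le> B \<eta>"
  shows "cmod (Ec P a g) \<le> (\<Sum>\<eta>\<in>set_pmf (P a). pmf (P a) \<eta> * B \<eta>)"
proof -
  have "cmod (Ec P a g) \<le> (\<Sum>\<eta>\<in>set_pmf (P a). cmod (complex_of_real (pmf (P a) \<eta>) * g \<eta>))"
    unfolding Ec_def by (rule norm_sum)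
  also have "\<dots> \<le> (\<Sum>\<eta>\<in>set_pmf (P a). pmf (P a) \<eta> * B \<eta>)"
  proof (rule sum_mono)
    fix \<eta> assume e: "\<eta> \<in> set_pmf (P a)"
    have "cmod (complex_of_real (pmf (P a) \<eta>) * g \<eta>) = pmf (P a) \<eta> * cmod (g \<eta>)"
      by (simp add: norm_mult)
    also have "\<dots> \<le> pmf (P a) \<eta> * B \<eta>" using b[OF e] by (simp add: mult_left_mono)
    finally show "cmod (complex_of_real (pmf (P a) \<eta>) * g \<eta>) \<le> pmf (P a) \<eta> * B \<eta>" .
  qed
  finally show ?thesis .
qed

lemma exp_len:
  assumes "avg_mutation_law P \<tau>"
  shows "(\<Sum>\<eta>\<in>set_pmf (P a). pmf (P a) \<eta> * real (length \<eta>)) = \<tau>"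
proof -
  have fin: "finite (set_pmf (P a))" using assms by (simp add: avg_mutation_law_def mutation_law_def)
  have "measure_pmf.expectation (P a) (\<lambda>\<eta>. real (length \<eta>)) = \<tau>"
    using assms by (simp add: avg_mutation_law_def)
  moreover have "measure_pmf.expectation (P a) (\<lambda>\<eta>. real (length \<eta>)) =
      (\<Sum>\<eta>\<in>set_pmf (P a). real (length \<eta>) * pmf (P a) \<eta>)"
    by (rule integral_measure_pmf_real[OF fin]) auto
  ultimately show ?thesis by (simp add: mult.commute)
qed

lemma sum_pmf_1: "finite (set_pmf M) \<Longrightarrow> (\<Sum>\<eta>\<in>set_pmf M. pmf M \<eta>) = 1"
  by (simp add: sum_pmf_eq_1)

lemma GG_bound:
  assumes fin: "\<And>a. finite (set_pmf (P a))"
    and el: "\<And>a. (\<Sum>\<eta>\<in>set_pmf (P a). pmf (P a) \<eta> * real (length \<eta>)) = \<tau>"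
    and ub: "\<And>x. cmod (U x) \<le> B" and k1: "1 \<le> k"
  shows "cmod (GG k P U y) \<le> B * (\<tau> + real k - 1)"
proof -
  have B0: "0 \<le> B" using ub[of undefined] norm_ge_zero order_trans by blast
  have a: "cmod (Ec P (y ! 0) (\<lambda>\<eta>. \<Sum>p<length \<eta>. U (Sw k p \<eta> y))) \<le> B * \<tau>"
  proof -
    have "cmod (Ec P (y ! 0) (\<lambda>\<eta>. \<Sum>p<length \<eta>. U (Sw k p \<eta> y)))
        \<le> (\<Sum>\<eta>\<in>set_pmf (P (y ! 0)). pmf (P (y ! 0)) \<eta> * (real (length \<eta>) * B))"
    proof (rule Ec_norm_le[OF fin])
      fix \<eta>
      have "cmod (\<Sum>p<length \<eta>. U (Sw k p \<eta> y)) \<le> (\<Sum>p<length \<eta>. cmod (U (Sw k p \<eta> y)))"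
        by (rule norm_sum)
      also have "\<dots> \<le> (\<Sum>p<length \<eta>. B)" by (rule sum_mono) (rule ub)
      finally show "cmod (\<Sum>p<length \<eta>. U (Sw k p \<eta> y)) \<le> real (length \<eta>) * B" by simp
    qed
    also have "\<dots> = B * \<tau>" using el[of "y ! 0"]
      by (simp add: sum_distrib_left[symmetric] sum_distrib_right[symmetric] algebra_simps
          flip: sum_distrib_right) 
    finally show ?thesis .
  qed
  have b: "cmod (Ec P (y ! j) (\<lambda>\<eta>. U (Tw k j \<eta> y))) \<le> B" for j
  proof -
    have "cmod (Ec P (y ! j) (\<lambda>\<eta>. U (Tw k j \<eta> y))) \<le> (\<Sum>\<eta>\<in>set_pmf (P (y ! j)). pmf (P (y ! j)) \<eta> * B)"
      by (rule Ec_norm_le[OF fin]) (rule ub)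
    also have "\<dots> = B" using sum_pmf_1[OF fin, of "y ! j"] by (simp add: sum_distrib_right[symmetric])
    finally show ?thesis .
  qed
  have c: "cmod (\<Sum>j\<in>{1..<k}. Ec P (y ! j) (\<lambda>\<eta>. U (Tw k j \<eta> y))) \<le> B * (real k - 1)"
  proof -
    have "cmod (\<Sum>j\<in>{1..<k}. Ec P (y ! j) (\<lambda>\<eta>. U (Tw k j \<eta> y))) \<le> (\<Sum>j\<in>{1..<k}. B)"
      by (rule order_trans[OF norm_sum sum_mono]) (rule b)
    also have "\<dots> = B * (real k - 1)" using k1 by (simp add: of_nat_diff mult.commute)
    finally show ?thesis .
  qed
  have "cmod (GG k P U y) \<le> B * \<tau> + B * (real k - 1)"
    unfolding GG_def by (rule order_trans[OF norm_triangle_ineq add_mono[OF a c]])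
  then show ?thesis by (simp add: algebra_simps)
qed

lemma Re_lt:
  fixes lam :: complex and \<rho> B :: real
  assumes "cmod (lam * z) \<le> B * \<rho>" "cmod z = B" "B > 0" "lam \<noteq> complex_of_real \<rho>"
  shows "Re lam < \<rho>"
proof -
  have "cmod lam * B \<le> B * \<rho>" using assms by (simp add: norm_mult)
  then have l: "cmod lam \<le> \<rho>" using assms(3) by (simp add: mult.commute)
  show ?thesis
  proof (rule ccontr)
    assume "\<not> Re lam < \<rho>"
    then have r: "Re lam \<ge> \<rho>" by simp
    have "Re lam \<le> cmod lam" by (rule complex_Re_le_cmod)
    then have eq: "Re lam = \<rho>" "cmod lam = \<rho>" using l r by linarith+
    have "(cmod lam)^2 = (Re lam)^2 + (Im lam)^2" by (simp add: cmod_power2)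
    then have "Im lam = 0" using eq by simp
    then have "lam = complex_of_real \<rho>" using eq by (simp add: complex_eq_iff)
    then show False using assms(4) by simp
  qed
qed

lemma inv_sq_upper:
  fixes L t :: real assumes L: "L > 0" and t: "t \<ge> 0"
  shows "1 / (L + t)^2 \<le> 1 / L^2 - 2 * t / L^3 + 3 * t^2 / L^4"
proof -
  have e: "1 / L^2 - 2 * t / L^3 + 3 * t^2 / L^4 = (L^2 - 2*t*L + 3*t^2) / L^4"
    using L by (simp add: field_simps power2_eq_square power3_eq_cube power4_eq_xxxx)
  have p: "(L+t)^2 * (L^2 - 2*t*L + 3*t^2) = L^4 + 4*L*t^3 + 3*t^4"
    by (simp add: algebra_simps power2_eq_square power3_eq_cube power4_eq_xxxx)
  have "L^4 \<le> (L^2 - 2*t*L + 3*t^2) * (L+t)^2" using p L t by (simp add: mult.commute)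
  then have "1 / (L + t)^2 \<le> (L^2 - 2*t*L + 3*t^2) / L^4"
    using L t by (simp add: divide_simps)
  then show ?thesis using e by simp
qed

lemma inv_sq_lower:
  fixes L t :: real assumes L: "L > 0" and t: "t \<ge> 0"
  shows "1 / L^2 - 2 * t / L^3 \<le> 1 / (L + t)^2"
proof -
  have e: "1 / L^2 - 2 * t / L^3 = (L - 2*t) / L^3"
    using L by (simp add: field_simps power2_eq_square power3_eq_cube)
  have p: "(L - 2*t) * (L+t)^2 = L^3 - 3*L*t^2 - 2*t^3"
    by (simp add: algebra_simps power2_eq_square power3_eq_cube)
  have "0 \<le> 3*L*t^2" "0 \<le> 2*t^3" using L t by simp_all
  then have "(L - 2*t) * (L+t)^2 \<le> L^3" using p by linarith
  then have "(L - 2*t) / L^3 \<le> 1 / (L + t)^2"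
    using L t by (simp add: divide_simps)
  then show ?thesis using e by simp
qed

lemma inv_sq_le:
  fixes L t :: real assumes L: "L > 0" and t: "t \<ge> 0"
  shows "1 / (L + t)^2 \<le> 1 / L^2"
  using L t by (simp add: divide_simps power_mono)

lemma normsq_add: "(cmod (f + d))^2 = (cmod f)^2 + 2 * Re (cnj f * d) + (cmod d)^2"
  by (simp only: cmod_power2) (simp add: power2_eq_square algebra_simps)

lemma Re_cnj_bound: "\<bar>Re (cnj f * d)\<bar> \<le> cmod f * cmod d"
  using abs_Re_le_cmod[of "cnj f * d"] by (simp add: norm_mult)

lemma per_outcome:
  fixes f d :: complex and L t M C D :: real
  assumes L1: "L \<ge> 1" and t0: "0 \<le> t" and tD: "t \<le> D" and fM: "cmod f \<le> M * L"
    and dC: "cmod d \<le> C" and M0: "0 \<le> M" and C0: "0 \<le> C"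
  shows "(cmod (f + d))^2 / (L + t)^2 \<le> (cmod f)^2 / L^2 + 2 * Re (cnj f * d) / L^2
           - 2 * (cmod f)^2 * t / L^3 + (3 * M^2 * D^2 + 4 * M * C * D + C^2) / L^2"
proof -
  define r where "r = cmod f"
  define x where "x = Re (cnj f * d)"
  define s where "s = (cmod d)^2"
  define q where "q = 1 / (L + t)^2"
  have L0: "L > 0" using L1 by simp
  have r0: "0 \<le> r" by (simp add: r_def)
  have lhs0: "(cmod (f + d))^2 / (L + t)^2 = (r^2 + 2 * x + s) * q"
    by (simp add: normsq_add r_def x_def s_def q_def)
  have lhs: "(cmod (f + d))^2 / (L + t)^2 = r^2 * q + 2 * x * q + s * q"
    unfolding lhs0 by (simp add: algebra_simps)
  have qu: "q \<le> 1 / L^2 - 2 * t / L^3 + 3 * t^2 / L^4" unfolding q_def by (rule inv_sq_upper[OF L0 t0])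
  have ql: "1 / L^2 - 2 * t / L^3 \<le> q" unfolding q_def by (rule inv_sq_lower[OF L0 t0])
  have qle: "q \<le> 1 / L^2" unfolding q_def by (rule inv_sq_le[OF L0 t0])
  have rL: "r \<le> M * L" using fM by (simp add: r_def)
  have r2: "r^2 \<le> M^2 * L^2"
    using power_mono[OF rL r0, of 2] by (simp add: power_mult_distrib)
  have t2: "t^2 \<le> D^2" using power_mono[OF tD t0, of 2] .
  have A1: "r^2 * q \<le> r^2 / L^2 - 2 * r^2 * t / L^3 + 3 * r^2 * t^2 / L^4"
    using mult_left_mono[OF qu, of "r^2"] by (simp add: algebra_simps)
  have A2: "3 * r^2 * t^2 / L^4 \<le> 3 * M^2 * D^2 / L^2"
  proof -
    have "r^2 * t^2 \<le> (M^2 * L^2) * D^2"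
      by (rule mult_mono[OF r2 t2]) (simp_all add: M0)
    then have "3 * r^2 * t^2 / L^4 \<le> 3 * ((M^2 * L^2) * D^2) / L^4"
      using L0 by (simp add: divide_right_mono)
    also have "\<dots> = 3 * M^2 * D^2 / L^2" using L0 by (simp add: field_simps power2_eq_square power4_eq_xxxx)
    finally show ?thesis .
  qed
  have xb: "\<bar>x\<bar> \<le> r * C"
    using Re_cnj_bound[of f d] mult_left_mono[OF dC r0] by (simp add: x_def r_def)
  have B1: "x * q \<le> x / L^2 + \<bar>x\<bar> * (2 * t / L^3)"
  proof -
    have "\<bar>q - 1 / L^2\<bar> \<le> 2 * t / L^3" using ql qle by linarith
    then have "\<bar>x\<bar> * \<bar>q - 1 / L^2\<bar> \<le> \<bar>x\<bar> * (2 * t / L^3)"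
      by (rule mult_left_mono) simp
    then have "\<bar>x * (q - 1 / L^2)\<bar> \<le> \<bar>x\<bar> * (2 * t / L^3)"
      by (simp only: abs_mult)
    moreover have "x * q = x / L^2 + x * (q - 1 / L^2)" by (simp add: algebra_simps)
    ultimately show ?thesis by linarith
  qed
  have B2: "\<bar>x\<bar> * (2 * t / L^3) \<le> 2 * M * C * D / L^2"
  proof -
    have "\<bar>x\<bar> \<le> M * L * C" using xb mult_right_mono[OF rL C0] by linarith
    moreover have "2 * t / L^3 \<le> 2 * D / L^3" using tD L0 by (simp add: divide_right_mono)
    ultimately have "\<bar>x\<bar> * (2 * t / L^3) \<le> (M * L * C) * (2 * D / L^3)"
      by (rule mult_mono) (use t0 L0 M0 C0 in \<open>auto intro: mult_nonneg_nonneg\<close>)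
    also have "\<dots> = 2 * M * C * D / L^2" using L0 by (simp add: field_simps power2_eq_square power3_eq_cube)
    finally show ?thesis .
  qed
  have C1: "s * q \<le> C^2 / L^2"
  proof -
    have s0: "0 \<le> s" by (simp add: s_def)
    have "s \<le> C^2" unfolding s_def using power_mono[OF dC norm_ge_zero, of 2] .
    moreover have "q \<le> 1 / L^2" by (rule qle)
    moreover have "0 \<le> q" by (simp add: q_def)
    ultimately have "s * q \<le> C^2 * (1 / L^2)" by (intro mult_mono) (use s0 in auto)
    then show ?thesis by simp
  qed
  have "(cmod (f + d))^2 / (L + t)^2 \<le> r^2 / L^2 - 2 * r^2 * t / L^3 + 3 * M^2 * D^2 / L^2
       + 2 * (x / L^2 + 2 * M * C * D / L^2) + C^2 / L^2"
  proof -
    have lc: "(v1::real) \<le> v2 - v3 + v4 \<Longrightarrow> v4 \<le> v5 \<Longrightarrow> v6 \<le> v7 + v8 \<Longrightarrow> v8 \<le> v9 \<Longrightarrow> v10 \<le> v11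
       \<Longrightarrow> v1 + 2 * v6 + v10 \<le> v2 - v3 + v5 + 2 * (v7 + v9) + v11" for v1 v2 v3 v4 v5 v6 v7 v8 v9 v10 v11 :: real
      by (smt (verit))
    have "r^2 * q + 2 * x * q + s * q = r^2 * q + 2 * (x * q) + s * q" by simp
    then show ?thesis unfolding lhs using lc[OF A1 A2 B1 B2 C1] by simp
  qed
  also have "\<dots> = (cmod f)^2 / L^2 + 2 * Re (cnj f * d) / L^2
           - 2 * (cmod f)^2 * t / L^3 + (3 * M^2 * D^2 + 4 * M * C * D + C^2) / L^2"
    by (simp add: r_def x_def add_divide_distrib diff_divide_distrib algebra_simps)
  finally show ?thesis .
qed

lemma inv_step:
  fixes L t D A :: real
  assumes "L > 0" "0 \<le> t" "t \<le> D" "0 \<le> A"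
  shows "A / (L + t) \<le> A / L - A * t / (L * (L + D))"
proof -
  have n1: "L + t \<noteq> 0" "L \<noteq> 0" using assms by auto
  have e1: "A / L = A * (L + t) / (L * (L + t))" using n1 by simp
  have e2: "A * (L + t) / (L * (L + t)) - A * t / (L * (L + t)) = (A * (L + t) - A * t) / (L * (L + t))"
    by (simp add: diff_divide_distrib)
  have e3: "(A * (L + t) - A * t) / (L * (L + t)) = A / (L + t)"
  proof -
    have "A * (L + t) - A * t = L * A" by (simp add: algebra_simps)
    then show ?thesis using n1 by simp
  qed
  have e: "A / (L + t) = A / L - A * t / (L * (L + t))" using e1 e2 e3 by simp
  have "A * t / (L * (L + D)) \<le> A * t / (L * (L + t))"
    using assms by (intro divide_left_mono mult_left_mono mult_pos_pos) auto
  then show ?thesis using e by linarith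
qed

lemma weighted_step:
  fixes wt :: "'i \<Rightarrow> real" and d :: "'i \<Rightarrow> complex" and t :: "'i \<Rightarrow> real"
    and f c :: complex and L M C D A K \<beta> \<delta> \<mu> :: real
  assumes finI: "finite I"
    and wt0: "\<And>i. i \<in> I \<Longrightarrow> 0 \<le> wt i" and wt1: "(\<Sum>i\<in>I. wt i) = 1"
    and wd: "(\<Sum>i\<in>I. complex_of_real (wt i) * d i) = c * f"
    and wtt: "(\<Sum>i\<in>I. wt i * t i) = \<beta>"
    and t0: "\<And>i. i \<in> I \<Longrightarrow> 0 \<le> t i" and tD: "\<And>i. i \<in> I \<Longrightarrow> t i \<le> D"
    and dC: "\<And>i. i \<in> I \<Longrightarrow> cmod (d i) \<le> C"
    and fM: "cmod f \<le> M * L" and L1: "L \<ge> 1" and M0: "0 \<le> M" and C0: "0 \<le> C"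
    and K: "K = 3 * M^2 * D^2 + 4 * M * C * D + C^2 + 1"
    and A: "A = 2 * K * (1 + D) / \<beta>" and \<beta>0: "\<beta> > 0"
    and c: "Re c * L = \<beta> - \<delta>" and \<mu>\<delta>: "\<mu> \<le> 2 * \<delta>" and \<mu>\<beta>: "\<mu> \<le> \<beta> / (2 * (1 + D))"
  shows "(\<Sum>i\<in>I. wt i * ((cmod (f + d i))^2 / (L + t i)^2 + A / (L + t i)))
          \<le> (1 - \<mu> / L) * ((cmod f)^2 / L^2 + A / L)"
proof -
  define K0 where "K0 = 3 * M^2 * D^2 + 4 * M * C * D + C^2"
  define h where "h = (cmod f)^2"
  have L0: "L > 0" using L1 by simp
  have D0: "0 \<le> D"
  proof -
    have "I \<noteq> {}" using wt1 by auto
    then obtain i where "i \<in> I" by auto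
    then show ?thesis using t0 tD by force
  qed
  have K0K: "K0 + 1 = K" using K by (simp add: K0_def)
  have K00: "0 \<le> K0" unfolding K0_def using M0 C0 D0 by simp
  have Kpos: "K > 0" using K0K K00 by linarith
  have A0: "A \<ge> 0" using A Kpos D0 \<beta>0 by simp
  define R where "R i = h / L^2 + 2 * Re (cnj f * d i) / L^2 - 2 * h * t i / L^3 + K0 / L^2
                        + (A / L - A * t i / (L * (L + D)))" for i
  have per: "(cmod (f + d i))^2 / (L + t i)^2 + A / (L + t i) \<le> R i" if i: "i \<in> I" for i
  proof -
    have "(cmod (f + d i))^2 / (L + t i)^2 \<le> h / L^2 + 2 * Re (cnj f * d i) / L^2 - 2 * h * t i / L^3 + K0 / L^2"
      unfolding h_def K0_def by (rule per_outcome[OF L1 t0[OF i] tD[OF i] fM dC[OF i] M0 C0])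
    moreover have "A / (L + t i) \<le> A / L - A * t i / (L * (L + D))"
      by (rule inv_step[OF L0 t0[OF i] tD[OF i] A0])
    ultimately show ?thesis unfolding R_def by linarith
  qed
  have "(\<Sum>i\<in>I. wt i * ((cmod (f + d i))^2 / (L + t i)^2 + A / (L + t i))) \<le> (\<Sum>i\<in>I. wt i * R i)"
    by (rule sum_mono) (use per wt0 in \<open>auto intro: mult_left_mono\<close>)
  also have "(\<Sum>i\<in>I. wt i * R i) = (h / L^2 + K0 / L^2 + A / L) * (\<Sum>i\<in>I. wt i)
      + 2 / L^2 * (\<Sum>i\<in>I. wt i * Re (cnj f * d i)) - (2 * h / L^3 + A / (L * (L + D))) * (\<Sum>i\<in>I. wt i * t i)"
  proof -
    have "wt i * R i = (h / L^2 + K0 / L^2 + A / L) * wt i + 2 / L^2 * (wt i * Re (cnj f * d i))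
        - (2 * h / L^3 + A / (L * (L + D))) * (wt i * t i)" for i
      unfolding R_def by (simp add: algebra_simps add_divide_distrib diff_divide_distrib)
    then show ?thesis by (simp add: sum.distrib sum_subtractf sum_distrib_left)
  qed
  also have "(\<Sum>i\<in>I. wt i * Re (cnj f * d i)) = Re (cnj f * (c * f))"
  proof -
    have "(\<Sum>i\<in>I. wt i * Re (cnj f * d i)) = Re (cnj f * (\<Sum>i\<in>I. complex_of_real (wt i) * d i))"
      by (simp add: sum_distrib_left Re_sum algebra_simps)
    then show ?thesis using wd by simp
  qed
  also have "Re (cnj f * (c * f)) = Re c * h"
  proof -
    have fc: "f * cnj f = complex_of_real h" unfolding h_def by (simp only: complex_norm_square)
    have "cnj f * (c * f) = c * (f * cnj f)" by (simp add: algebra_simps)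
    then have eq: "cnj f * (c * f) = c * complex_of_real h" using fc by simp
    show ?thesis unfolding eq by simp
  qed
  finally have S: "(\<Sum>i\<in>I. wt i * ((cmod (f + d i))^2 / (L + t i)^2 + A / (L + t i)))
      \<le> (h / L^2 + K0 / L^2 + A / L) + 2 / L^2 * (Re c * h) - (2 * h / L^3 + A / (L * (L + D))) * \<beta>"
    using wt1 wtt by simp
  have e1: "2 / L^2 * (Re c * h) = 2 * (\<beta> - \<delta>) * h / L^3"
  proof -
    have "2 / L^2 * (Re c * h) = 2 * (Re c * L) * h / L^3" using L0 by (simp add: field_simps power2_eq_square power3_eq_cube)
    then show ?thesis using c by simp
  qed
  have e2: "(2 * h / L^3 + A / (L * (L + D))) * \<beta> = 2 * \<beta> * h / L^3 + A * \<beta> / (L * (L + D))"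
    by (simp add: algebra_simps)
  have e3: "2 * (\<beta> - \<delta>) * h / L^3 - 2 * \<beta> * h / L^3 = - (2 * \<delta>) * (h / L^2) / L"
    using L0 by (simp add: field_simps power2_eq_square power3_eq_cube)
  have h0: "0 \<le> h / L^2" by (simp add: h_def)
  have f1: "- (2 * \<delta>) * (h / L^2) / L \<le> - \<mu> * (h / L^2) / L"
  proof -
    have "\<mu> * (h / L^2) \<le> (2 * \<delta>) * (h / L^2)" using mult_right_mono[OF \<mu>\<delta> h0] .
    then have "\<mu> * (h / L^2) / L \<le> (2 * \<delta>) * (h / L^2) / L" by (rule divide_right_mono) (use L0 in simp)
    moreover have "- (2 * \<delta>) * (h / L^2) / L = - ((2 * \<delta>) * (h / L^2) / L)" by simp
    moreover have "- \<mu> * (h / L^2) / L = - (\<mu> * (h / L^2) / L)" by simp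
    ultimately show ?thesis by linarith
  qed
  have f2: "K0 / L^2 - A * \<beta> / (L * (L + D)) \<le> - \<mu> * (A / L) / L"
  proof -
    have "L * 1 \<le> L * L" using L1 by (intro mult_left_mono) auto
    then have "D * L \<le> D * (L * L)" using D0 by (intro mult_left_mono) auto
    then have LD: "L * (L + D) \<le> (1 + D) * L^2" by (simp add: algebra_simps power2_eq_square)
    have pos: "0 < L * (L + D)" using L0 D0 by simp
    have eqA: "A * \<beta> = (2 * K) * (1 + D)" using A \<beta>0 by simp
    have n: "1 + D \<noteq> 0" using D0 by simp
    have "A * \<beta> / ((1 + D) * L^2) = (2 * K) * (1 + D) / (L^2 * (1 + D))" unfolding eqA by (simp add: mult.commute)
    also have "\<dots> = 2 * K / L^2" using n by simp
    finally have "A * \<beta> / ((1 + D) * L^2) = 2 * K / L^2" .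
    moreover have "A * \<beta> / ((1 + D) * L^2) \<le> A * \<beta> / (L * (L + D))"
      using LD pos A0 \<beta>0 by (intro divide_left_mono) auto
    moreover have "\<mu> * A \<le> K"
    proof -
      have "\<mu> * A \<le> \<beta> / (2 * (1 + D)) * A" by (rule mult_right_mono[OF \<mu>\<beta> A0])
      also have "\<dots> = K" using A \<beta>0 D0 by (simp add: field_simps)
      finally show ?thesis .
    qed
    then have "K0 / L^2 + \<mu> * A / L^2 \<le> 2 * K / L^2"
      using K0K L0 by (simp add: add_divide_distrib[symmetric] divide_right_mono)
    moreover have "\<mu> * (A / L) / L = \<mu> * A / L^2" by (simp add: power2_eq_square)
    ultimately show ?thesis by linarith
  qed
  have "(h / L^2 + K0 / L^2 + A / L) + 2 / L^2 * (Re c * h) - (2 * h / L^3 + A / (L * (L + D))) * \<beta>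
      \<le> (1 - \<mu> / L) * (h / L^2 + A / L)"
  proof -
    have g: "(1 - \<mu> / L) * X = X - \<mu> * X / L" for X by (simp add: algebra_simps)
    have g2: "\<mu> * (h / L^2 + A / L) / L = \<mu> * (h / L^2) / L + \<mu> * (A / L) / L"
      by (simp add: distrib_left add_divide_distrib)
    have "(1 - \<mu> / L) * (h / L^2 + A / L) = h / L^2 + A / L - \<mu> * (h / L^2) / L - \<mu> * (A / L) / L"
      unfolding g g2 by simp
    note rhs = this
    define X1 where "X1 = h / L^2"
    define X2 where "X2 = K0 / L^2"
    define X3 where "X3 = A / L"
    define X4 where "X4 = 2 * (\<beta> - \<delta>) * h / L ^ 3"
    define X5 where "X5 = 2 * \<beta> * h / L ^ 3"
    define X6 where "X6 = A * \<beta> / (L * (L + D))"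
    define Y1 where "Y1 = \<mu> * (h / L^2) / L"
    define Y2 where "Y2 = \<mu> * (A / L) / L"
    define Z where "Z = (2 * \<delta>) * (h / L^2) / L"
    have q1: "X4 - X5 = - Z" using e3 by (simp add: X4_def X5_def Z_def)
    have q2: "- Z \<le> - Y1" using f1 by (simp add: Z_def Y1_def)
    have q3: "X2 - X6 \<le> - Y2" using f2 by (simp add: X2_def X6_def Y2_def)
    have q4: "(1 - \<mu> / L) * (h / L^2 + A / L) = X1 + X3 - Y1 - Y2"
      using rhs by (simp add: X1_def X3_def Y1_def Y2_def)
    have q5: "h / L^2 + K0 / L^2 + A / L + 2 / L^2 * (Re c * h) - (2 * h / L^3 + A / (L * (L + D))) * \<beta>
       = X1 + X2 + X3 + X4 - (X5 + X6)"
      unfolding e1 e2 by (simp add: X1_def X2_def X3_def X4_def X5_def X6_def)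
    show ?thesis unfolding q4 q5 using q1 q2 q3 by linarith
  qed
  then show ?thesis using S by (simp add: h_def)
qed

definition mutw :: "'a list \<Rightarrow> nat \<Rightarrow> 'a list \<Rightarrow> 'a list" where
  "mutw v i \<eta> = take i v @ \<eta> @ drop (Suc i) v"

lemma length_mutw: "i < length v \<Longrightarrow> length (mutw v i \<eta>) = length v - 1 + length \<eta>"
  by (simp add: mutw_def)

lemma set_mut_step:
  assumes "v \<noteq> []"
  shows "set_pmf (mut_step P v) = (\<Union>i\<in>{..<length v}. mutw v i ` set_pmf (P (v ! i)))"
  using assms unfolding mut_step_def mutw_def
  by (simp add: set_bind_pmf set_pmf_of_set lessThan_empty_iff)

lemma finite_mut_step:
  assumes "v \<noteq> []" and fin: "\<And>a. finite (set_pmf (P a))"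
  shows "finite (set_pmf (mut_step P v))"
  using assms by (simp add: set_mut_step)

lemma exp_step:
  fixes g :: "'a list \<Rightarrow> real"
  assumes v: "v \<noteq> []" and fin: "\<And>a. finite (set_pmf (P a))"
  shows "measure_pmf.expectation (mut_step P v) g =
     (\<Sum>i<length v. \<Sum>\<eta>\<in>set_pmf (P (v ! i)). pmf (P (v ! i)) \<eta> * g (mutw v i \<eta>)) / real (length v)"
proof -
  have ne: "{..<length v} \<noteq> {}" using v by auto
  have "measure_pmf.expectation (mut_step P v) g =
      (\<Sum>i\<in>{..<length v}. measure_pmf.expectation (map_pmf (mutw v i) (P (v ! i))) g /\<^sub>R real (card {..<length v}))"
    unfolding mut_step_def mutw_def[abs_def]
    by (rule pmf_expectation_bind_pmf_of_set[OF ne]) (auto simp: fin)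
  also have "\<dots> = (\<Sum>i<length v. (\<Sum>\<eta>\<in>set_pmf (P (v ! i)). pmf (P (v ! i)) \<eta> * g (mutw v i \<eta>)) / real (length v))"
  proof (rule sum.cong[OF refl])
    fix i
    have "measure_pmf.expectation (map_pmf (mutw v i) (P (v ! i))) g
        = measure_pmf.expectation (P (v ! i)) (\<lambda>\<eta>. g (mutw v i \<eta>))" by simp
    also have "\<dots> = (\<Sum>\<eta>\<in>set_pmf (P (v ! i)). g (mutw v i \<eta>) * pmf (P (v ! i)) \<eta>)"
      by (rule integral_measure_pmf_real[OF fin]) auto
    finally show "measure_pmf.expectation (map_pmf (mutw v i) (P (v ! i))) g /\<^sub>R real (card {..<length v})
        = (\<Sum>\<eta>\<in>set_pmf (P (v ! i)). pmf (P (v ! i)) \<eta> * g (mutw v i \<eta>)) / real (length v)"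
      by (simp add: mult.commute divide_inverse_commute)
  qed
  finally show ?thesis by (simp add: sum_divide_distrib)
qed

lemma exp_finite:
  fixes g :: "'a \<Rightarrow> real"
  assumes "finite (set_pmf M)"
  shows "measure_pmf.expectation M g = (\<Sum>v\<in>set_pmf M. pmf M v * g v)"
  using integral_measure_pmf_real[OF assms, of M g] by (simp add: mult.commute)

lemma mut_system_support:
  fixes P :: "'a \<Rightarrow> 'a list pmf"
  assumes fin: "\<And>a. finite (set_pmf (P a))" and ne: "\<And>a. [] \<notin> set_pmf (P a)"
    and lenD: "\<And>a \<eta>. \<eta> \<in> set_pmf (P a) \<Longrightarrow> length \<eta> \<le> D"
    and w: "w \<noteq> []"
  shows "finite (set_pmf (mut_system P w n)) \<and>
    (\<forall>v\<in>set_pmf (mut_system P w n). length w \<le> length v \<and> length v \<le> length w + D * n)"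
proof (induction n)
  case 0
  then show ?case by simp
next
  case (Suc n)
  have vne: "v \<noteq> []" if "v \<in> set_pmf (mut_system P w n)" for v
    using Suc that w by auto
  have fin': "finite (set_pmf (mut_system P w (Suc n)))"
    using Suc vne by (auto simp: set_bind_pmf intro!: finite_mut_step fin)
  moreover have "length w \<le> length v' \<and> length v' \<le> length w + D * Suc n"
    if v': "v' \<in> set_pmf (mut_system P w (Suc n))" for v'
  proof -
    obtain v where v: "v \<in> set_pmf (mut_system P w n)" and v'2: "v' \<in> set_pmf (mut_step P v)"
      using v' by (auto simp: set_bind_pmf)
    obtain i \<eta> where i: "i < length v" and eta: "\<eta> \<in> set_pmf (P (v ! i))" and v'e: "v' = mutw v i \<eta>"
      using v'2 set_mut_step[OF vne[OF v], of P] by auto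
    have l1: "1 \<le> length \<eta>" using ne eta by (cases \<eta>) auto
    have l2: "length \<eta> \<le> D" using lenD eta by blast
    have "length v' = length v - 1 + length \<eta>" using v'e i by (simp add: length_mutw)
    then show ?thesis using Suc v l1 l2 i by auto
  qed
  ultimately show ?case by blast
qed

lemma exp_system_Suc:
  fixes g :: "'a list \<Rightarrow> real"
  assumes fin: "finite (set_pmf (mut_system P w n))"
    and fin2: "\<And>v. v \<in> set_pmf (mut_system P w n) \<Longrightarrow> finite (set_pmf (mut_step P v))"
  shows "measure_pmf.expectation (mut_system P w (Suc n)) g
       = (\<Sum>v\<in>set_pmf (mut_system P w n). pmf (mut_system P w n) v * measure_pmf.expectation (mut_step P v) g)"
  using pmf_expectation_bind[OF fin fin2 subset_refl, where h=g] by simp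

lemma ln_le_harm_sum: "ln (real n + 1) \<le> (\<Sum>j<n. 1 / (real j + 1))"
proof (induction n)
  case 0 then show ?case by simp
next
  case (Suc n)
  have pos: "real n + 1 > 0" by simp
  have e: "real (Suc n) + 1 = (real n + 1) * (1 + 1 / (real n + 1))"
    using pos by (simp add: field_simps)
  have "ln (real (Suc n) + 1) = ln (real n + 1) + ln (1 + 1 / (real n + 1))"
  proof -
    have p2: "0 < 1 + 1 / (real n + 1)" using pos by (simp add: add_pos_pos)
    show ?thesis unfolding e by (rule ln_mult_pos[OF pos p2])
  qed
  also have "\<dots> \<le> ln (real n + 1) + 1 / (real n + 1)"
    by (simp add: ln_add_one_self_le_self)
  finally show ?case using Suc by simp
qed

lemma prod_to_zero:
  fixes e :: "nat \<Rightarrow> real" and \<mu> m D :: real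
  assumes \<mu>0: "\<mu> > 0" and \<mu>1: "\<mu> \<le> 1" and m1: "m \<ge> 1" and D0: "D \<ge> 0"
    and e0: "\<And>n. e n \<ge> 0" and rec: "\<And>n. e (Suc n) \<le> (1 - \<mu> / (m + D * real n)) * e n"
  shows "e \<longlonglongrightarrow> 0"
proof -
  define c where "c = \<mu> / (m + D)"
  have c0: "c > 0" using \<mu>0 m1 D0 by (simp add: c_def)
  have step: "e n \<le> e 0 * exp (- (\<Sum>j<n. \<mu> / (m + D * real j)))" for n
  proof (induction n)
    case 0 then show ?case by simp
  next
    case (Suc n)
    have pos: "m + D * real n > 0" using m1 D0 by (simp add: add_pos_nonneg)
    have f0: "0 \<le> 1 - \<mu> / (m + D * real n)"
    proof -
      have "\<mu> / (m + D * real n) \<le> 1" using pos \<mu>1 m1 D0 by (simp add: divide_le_eq) (smt (verit) mult_nonneg_nonneg of_nat_0_le_iff)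
      then show ?thesis by simp
    qed
    have f1: "1 - \<mu> / (m + D * real n) \<le> exp (- (\<mu> / (m + D * real n)))"
      using exp_ge_add_one_self[of "- (\<mu> / (m + D * real n))"] by simp
    have "e (Suc n) \<le> (1 - \<mu> / (m + D * real n)) * e n" by (rule rec)
    also have "\<dots> \<le> exp (- (\<mu> / (m + D * real n))) * (e 0 * exp (- (\<Sum>j<n. \<mu> / (m + D * real j))))"
      by (rule mult_mono[OF f1 Suc]) (use e0 in auto)
    also have "\<dots> = e 0 * exp (- (\<Sum>j<Suc n. \<mu> / (m + D * real j)))"
      by (simp add: exp_add[symmetric] algebra_simps)
    finally show ?case .
  qed
  have sumlb: "c * ln (real n + 1) \<le> (\<Sum>j<n. \<mu> / (m + D * real j))" for n
  proof -
    have "c * ln (real n + 1) \<le> c * (\<Sum>j<n. 1 / (real j + 1))"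
      using ln_le_harm_sum[of n] c0 by (simp add: mult_left_mono)
    also have "\<dots> = (\<Sum>j<n. c / (real j + 1))" by (simp add: sum_distrib_left)
    also have "\<dots> \<le> (\<Sum>j<n. \<mu> / (m + D * real j))"
    proof (rule sum_mono)
      fix j
      have le: "m + D * real j \<le> (m + D) * (real j + 1)"
        using m1 D0 by (simp add: algebra_simps)
      have pos: "0 < m + D * real j" using m1 D0 by (simp add: add_pos_nonneg)
      have "\<mu> / ((m + D) * (real j + 1)) \<le> \<mu> / (m + D * real j)"
        by (rule divide_left_mono[OF le]) (use \<mu>0 pos m1 D0 in \<open>auto intro!: mult_pos_pos add_pos_nonneg\<close>)
      then show "c / (real j + 1) \<le> \<mu> / (m + D * real j)" by (simp add: c_def)
    qed
    finally show ?thesis .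
  qed
  have bound: "e n \<le> e 0 * (real n + 1) powr (- c)" for n
  proof -
    have "exp (- (\<Sum>j<n. \<mu> / (m + D * real j))) \<le> exp (- (c * ln (real n + 1)))"
      using sumlb[of n] by simp
    also have "\<dots> = (real n + 1) powr (- c)" by (simp add: powr_def)
    finally show ?thesis using step[of n] e0[of 0] by (meson mult_left_mono order_trans)
  qed
  have lim: "(\<lambda>n. e 0 * (real n + 1) powr (- c)) \<longlonglongrightarrow> 0"
  proof -
    have "filterlim (\<lambda>n. 1 + real n) at_top sequentially"
      by (rule filterlim_tendsto_add_at_top[OF tendsto_const filterlim_real_sequentially])
    then have "filterlim (\<lambda>n. real n + 1) at_top sequentially" by (simp add: add.commute)
    then have "(\<lambda>n. (real n + 1) powr (- c)) \<longlonglongrightarrow> 0"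
      by (rule tendsto_neg_powr[rotated]) (use c0 in simp)
    then show ?thesis by (simp add: tendsto_mult_right_zero)
  qed
  show ?thesis
    by (rule tendsto_sandwich[OF _ _ tendsto_const lim]) (use e0 bound in auto)
qed


lemma one_step:
  fixes P :: "'a::finite \<Rightarrow> 'a list pmf" and U :: "'a list \<Rightarrow> complex"
  assumes k1: "1 \<le> k" and kv: "k \<le> length v"
    and fin: "\<And>a. finite (set_pmf (P a))" and ne: "\<And>a. [] \<notin> set_pmf (P a)"
    and lenD: "\<And>a \<eta>. \<eta> \<in> set_pmf (P a) \<Longrightarrow> length \<eta> \<le> D"
    and el: "\<And>a. (\<Sum>\<eta>\<in>set_pmf (P a). pmf (P a) \<eta> * real (length \<eta>)) = \<tau>"
    and eig: "\<And>y. y \<in> words k \<Longrightarrow> GG k P U y = lam * U y"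
    and ub: "\<And>x. cmod (U x) \<le> B"
    and K: "K = 3 * B^2 * (real D)^2 + 4 * B * ((real D + 2 * real k) * B) * real D + ((real D + 2 * real k) * B)^2 + 1"
    and A: "A = 2 * K * (1 + real D) / (\<tau> - 1)" and \<tau>1: "\<tau> > 1"
    and \<mu>\<delta>: "\<mu> \<le> 2 * (\<tau> + real k - 1 - Re lam)" and \<mu>\<beta>: "\<mu> \<le> (\<tau> - 1) / (2 * (1 + real D))"
  shows "measure_pmf.expectation (mut_step P v) (\<lambda>v. (cmod (FF k U v))^2 / (real (length v))^2 + A / real (length v))
     \<le> (1 - \<mu> / real (length v)) * ((cmod (FF k U v))^2 / (real (length v))^2 + A / real (length v))"
proof -
  define L where "L = length v"
  define \<Phi> where "\<Phi> z = (cmod (FF k U z))^2 / (real (length z))^2 + A / real (length z)" for z :: "'a list"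
  define I where "I = Sigma {..<L} (\<lambda>i. set_pmf (P (v ! i)))"
  define wt :: "nat \<times> 'a list \<Rightarrow> real" where "wt = (\<lambda>(i, \<eta>). pmf (P (v ! i)) \<eta> / real L)"
  define d :: "nat \<times> 'a list \<Rightarrow> complex" where "d = (\<lambda>(i, \<eta>). FF k U (mutw v i \<eta>) - FF k U v)"
  define t :: "nat \<times> 'a list \<Rightarrow> real" where "t = (\<lambda>(i, \<eta>). real (length \<eta>) - 1)"
  define f where "f = FF k U v"
  have L1: "1 \<le> L" using k1 kv by (simp add: L_def)
  have vne: "v \<noteq> []" using L1 by (auto simp: L_def)
  have B0: "0 \<le> B" using ub[of undefined] norm_ge_zero order_trans by blast
  have finI: "finite I" unfolding I_def using fin by auto
  have E1: "measure_pmf.expectation (mut_step P v) \<Phi> = (\<Sum>x\<in>I. wt x * \<Phi> (mutw v (fst x) (snd x)))"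
  proof -
    have "measure_pmf.expectation (mut_step P v) \<Phi>
        = (\<Sum>i<L. \<Sum>\<eta>\<in>set_pmf (P (v ! i)). pmf (P (v ! i)) \<eta> * \<Phi> (mutw v i \<eta>)) / real L"
      unfolding L_def by (rule exp_step[OF vne fin])
    also have "\<dots> = (\<Sum>i<L. \<Sum>\<eta>\<in>set_pmf (P (v ! i)). wt (i, \<eta>) * \<Phi> (mutw v i \<eta>))"
      by (simp add: sum_divide_distrib wt_def)
    also have "\<dots> = (\<Sum>x\<in>I. wt x * \<Phi> (mutw v (fst x) (snd x)))"
      unfolding I_def by (subst sum.Sigma) (auto simp: fin split_def)
    finally show ?thesis .
  qed
  have E2: "\<Phi> (mutw v (fst x) (snd x)) = (cmod (f + d x))^2 / (real L + t x)^2 + A / (real L + t x)"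
    if x: "x \<in> I" for x
  proof -
    obtain i \<eta> where xe: "x = (i, \<eta>)" and i: "i < L" and eta: "\<eta> \<in> set_pmf (P (v ! i))"
      using x by (auto simp: I_def)
    have l1: "1 \<le> length \<eta>" using ne eta by (cases \<eta>) auto
    have "real (length (mutw v i \<eta>)) = real L + t x"
      using i l1 L1 by (simp add: length_mutw xe t_def L_def of_nat_diff)
    moreover have "f + d x = FF k U (mutw v i \<eta>)" by (simp add: f_def d_def xe)
    ultimately show ?thesis by (simp add: \<Phi>_def xe)
  qed
  have wt1: "(\<Sum>x\<in>I. wt x) = 1"
  proof -
    have "(\<Sum>x\<in>I. wt x) = (\<Sum>i<L. \<Sum>\<eta>\<in>set_pmf (P (v ! i)). pmf (P (v ! i)) \<eta> / real L)"
      unfolding I_def wt_def by (subst sum.Sigma[symmetric]) (auto simp: fin)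
    also have "\<dots> = (\<Sum>i<L. 1 / real L)"
      by (rule sum.cong[OF refl]) (simp add: sum_divide_distrib[symmetric] sum_pmf_1[OF fin])
    also have "\<dots> = 1" using L1 by simp
    finally show ?thesis .
  qed
  have wtt: "(\<Sum>x\<in>I. wt x * t x) = \<tau> - 1"
  proof -
    have "(\<Sum>x\<in>I. wt x * t x) = (\<Sum>i<L. \<Sum>\<eta>\<in>set_pmf (P (v ! i)). pmf (P (v ! i)) \<eta> / real L * (real (length \<eta>) - 1))"
    proof -
      have "(\<Sum>x\<in>I. wt x * t x) = (\<Sum>(i, \<eta>)\<in>I. pmf (P (v ! i)) \<eta> / real L * (real (length \<eta>) - 1))"
        by (rule sum.cong[OF refl]) (auto simp: wt_def t_def)
      also have "\<dots> = (\<Sum>i<L. \<Sum>\<eta>\<in>set_pmf (P (v ! i)). pmf (P (v ! i)) \<eta> / real L * (real (length \<eta>) - 1))"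
        unfolding I_def by (rule sum.Sigma[symmetric]) (auto simp: fin)
      finally show ?thesis .
    qed
    also have "\<dots> = (\<Sum>i<L. (\<tau> - 1) / real L)"
    proof (rule sum.cong[OF refl])
      fix i
      have "(\<Sum>\<eta>\<in>set_pmf (P (v ! i)). pmf (P (v ! i)) \<eta> * (real (length \<eta>) - 1))
          = (\<Sum>\<eta>\<in>set_pmf (P (v ! i)). pmf (P (v ! i)) \<eta> * real (length \<eta>)) - (\<Sum>\<eta>\<in>set_pmf (P (v ! i)). pmf (P (v ! i)) \<eta>)"
        by (simp add: algebra_simps sum_subtractf)
      also have "\<dots> = \<tau> - 1" using el sum_pmf_1[OF fin] by simp
      finally have s1: "(\<Sum>\<eta>\<in>set_pmf (P (v ! i)). pmf (P (v ! i)) \<eta> * (real (length \<eta>) - 1)) = \<tau> - 1" .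
      have s2: "(\<Sum>\<eta>\<in>set_pmf (P (v ! i)). pmf (P (v ! i)) \<eta> / real L * (real (length \<eta>) - 1))
          = (\<Sum>\<eta>\<in>set_pmf (P (v ! i)). pmf (P (v ! i)) \<eta> * (real (length \<eta>) - 1)) / real L"
        by (simp add: sum_divide_distrib)
      show "(\<Sum>\<eta>\<in>set_pmf (P (v ! i)). pmf (P (v ! i)) \<eta> / real L * (real (length \<eta>) - 1)) = (\<tau> - 1) / real L"
        unfolding s2 s1 ..
    qed
    also have "\<dots> = \<tau> - 1" using L1 by simp
    finally show ?thesis .
  qed
  have wd: "(\<Sum>x\<in>I. complex_of_real (wt x) * d x) = ((lam - of_nat k) / of_nat L) * f"
  proof -
    have "(\<Sum>x\<in>I. complex_of_real (wt x) * d x)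
        = (\<Sum>i<L. \<Sum>\<eta>\<in>set_pmf (P (v ! i)). complex_of_real (pmf (P (v ! i)) \<eta> / real L) * (FF k U (mutw v i \<eta>) - FF k U v))"
    proof -
      have "(\<Sum>x\<in>I. complex_of_real (wt x) * d x) = (\<Sum>(i, \<eta>)\<in>I. complex_of_real (pmf (P (v ! i)) \<eta> / real L) * (FF k U (mutw v i \<eta>) - FF k U v))"
        by (rule sum.cong[OF refl]) (auto simp: wt_def d_def)
      also have "\<dots> = (\<Sum>i<L. \<Sum>\<eta>\<in>set_pmf (P (v ! i)). complex_of_real (pmf (P (v ! i)) \<eta> / real L) * (FF k U (mutw v i \<eta>) - FF k U v))"
        unfolding I_def by (rule sum.Sigma[symmetric]) (auto simp: fin)
      finally show ?thesis .
    qed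
    also have "\<dots> = (\<Sum>i<L. Ec P (v ! i) (\<lambda>\<eta>. FF k U (take i v @ \<eta> @ drop (Suc i) v) - FF k U v)) / of_nat L"
      by (simp add: Ec_def mutw_def sum_divide_distrib)
    also have "\<dots> = (\<Sum>p<L. GG k P U (win k v p) - of_nat k * U (win k v p)) / of_nat L"
      unfolding L_def by (subst step_sum[OF k1 kv fin ne]) simp
    also have "\<dots> = (\<Sum>p<L. (lam - of_nat k) * U (win k v p)) / of_nat L"
      by (rule arg_cong[where f = "\<lambda>z. z / of_nat L"], rule sum.cong[OF refl])
         (simp add: eig words_def algebra_simps)
    also have "\<dots> = ((lam - of_nat k) / of_nat L) * f"
      by (simp add: f_def FF_def L_def sum_distrib_left sum_divide_distrib)
    finally show ?thesis .
  qed
  have tb: "0 \<le> t x \<and> t x \<le> real D" if x: "x \<in> I" for x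
  proof -
    obtain i \<eta> where xe: "x = (i, \<eta>)" and eta: "\<eta> \<in> set_pmf (P (v ! i))"
      using x by (auto simp: I_def)
    have "1 \<le> length \<eta>" using ne eta by (cases \<eta>) auto
    moreover have "length \<eta> \<le> D" using lenD eta by blast
    ultimately show ?thesis by (simp add: t_def xe)
  qed
  have dC: "cmod (d x) \<le> (real D + 2 * real k) * B" if x: "x \<in> I" for x
  proof -
    obtain i \<eta> where xe: "x = (i, \<eta>)" and i: "i < L" and eta: "\<eta> \<in> set_pmf (P (v ! i))"
      using x by (auto simp: I_def)
    have etne: "\<eta> \<noteq> []" using ne eta by blast
    have lD: "real (length \<eta>) \<le> real D" using lenD eta by simp
    have "d x = (\<Sum>p<length \<eta>. U (Sw k p \<eta> (win k v i))) - U (win k v i)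
      + (\<Sum>j\<in>{1..<k}. U (Tw k j \<eta> (win k v (i + (length v - j)))) - U (win k v (i + (length v - j))))"
      using FF_mut_delta[OF k1 kv _ etne, of i U] i by (simp add: d_def xe mutw_def L_def)
    also have "cmod \<dots> \<le> real (length \<eta>) * B + B + (real k - 1) * (2 * B)"
    proof -
      have a1: "cmod (\<Sum>p<length \<eta>. U (Sw k p \<eta> (win k v i))) \<le> real (length \<eta>) * B"
      proof -
        have "cmod (\<Sum>p<length \<eta>. U (Sw k p \<eta> (win k v i))) \<le> (\<Sum>p<length \<eta>. cmod (U (Sw k p \<eta> (win k v i))))"
          by (rule norm_sum)
        also have "\<dots> \<le> (\<Sum>p<length \<eta>. B)" by (rule sum_mono) (rule ub)
        finally show ?thesis by simp
      qed
      have a2: "cmod (\<Sum>j\<in>{1..<k}. U (Tw k j \<eta> (win k v (i + (length v - j)))) - U (win k v (i + (length v - j))))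
          \<le> (real k - 1) * (2 * B)"
      proof -
        have "cmod (\<Sum>j\<in>{1..<k}. U (Tw k j \<eta> (win k v (i + (length v - j)))) - U (win k v (i + (length v - j))))
          \<le> (\<Sum>j\<in>{1..<k}. 2 * B)"
        proof (rule order_trans[OF norm_sum sum_mono])
          fix j
          show "cmod (U (Tw k j \<eta> (win k v (i + (length v - j)))) - U (win k v (i + (length v - j)))) \<le> 2 * B"
            using norm_triangle_ineq4[of "U (Tw k j \<eta> (win k v (i + (length v - j))))" "U (win k v (i + (length v - j)))"]
              ub[of "Tw k j \<eta> (win k v (i + (length v - j)))"] ub[of "win k v (i + (length v - j))"] by linarith
        qed
        also have "\<dots> = (real k - 1) * (2 * B)" using k1 by (simp add: of_nat_diff)
        finally show ?thesis .
      qed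
      have a3: "cmod (U (win k v i)) \<le> B" by (rule ub)
      show ?thesis
        using norm_triangle_ineq[of "(\<Sum>p<length \<eta>. U (Sw k p \<eta> (win k v i))) - U (win k v i)"
            "\<Sum>j\<in>{1..<k}. U (Tw k j \<eta> (win k v (i + (length v - j)))) - U (win k v (i + (length v - j)))"]
          norm_triangle_ineq4[of "\<Sum>p<length \<eta>. U (Sw k p \<eta> (win k v i))" "U (win k v i)"] a1 a2 a3
        by linarith
    qed
    also have "\<dots> \<le> (real D + 2 * real k) * B"
    proof -
      have h: "B * real (length \<eta>) \<le> B * real D" using mult_left_mono[OF lD B0] .
      have e1: "real (length \<eta>) * B + B + (real k - 1) * (2 * B) = B * real (length \<eta>) + 2 * real k * B - B"
        by (simp add: algebra_simps)
      have e2: "(real D + 2 * real k) * B = B * real D + 2 * real k * B" by (simp add: algebra_simps)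
      show ?thesis unfolding e1 e2 using h B0 by linarith
    qed
    finally show ?thesis .
  qed
  have fM: "cmod f \<le> B * real L"
  proof -
    have "cmod f \<le> (\<Sum>p<L. cmod (U (win k v p)))" unfolding f_def FF_def L_def by (rule norm_sum)
    also have "\<dots> \<le> (\<Sum>p<L. B)" by (rule sum_mono) (rule ub)
    finally show ?thesis by (simp add: mult.commute)
  qed
  have cc: "Re ((lam - of_nat k) / of_nat L) * real L = (\<tau> - 1) - (\<tau> + real k - 1 - Re lam)"
    using L1 by simp
  have "(\<Sum>x\<in>I. wt x * ((cmod (f + d x))^2 / (real L + t x)^2 + A / (real L + t x)))
          \<le> (1 - \<mu> / real L) * ((cmod f)^2 / (real L)^2 + A / real L)"
    by (rule weighted_step[OF finI _ wt1 wd wtt _ _ dC fM _ B0 _ K A _ cc \<mu>\<delta> \<mu>\<beta>])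
       (use L1 \<tau>1 B0 tb in \<open>auto simp: wt_def split: prod.splits\<close>)
  then show ?thesis
    using E1 E2 by (simp add: \<Phi>_def[symmetric] f_def L_def cong: sum.cong)
qed

theorem mainTheorem12:
  fixes P :: "'a::finite \<Rightarrow> 'a list pmf" and \<tau> :: real and k :: nat
    and w :: "'a list" and lam :: complex and u :: "complex vec"
  assumes "avg_mutation_law P \<tau>" and "\<tau> > 1" and "k \<ge> 1" and "length w \<ge> k"
    and "alg_mult (subst_matrix P k) (complex_of_real (\<tau> + real k - 1)) = 1"
    and "lam \<noteq> complex_of_real (\<tau> + real k - 1)"
    and "left_eigenvector (subst_matrix P k) u lam"
  shows "\<forall>\<epsilon>>0. (\<lambda>n. measure_pmf.prob (mut_system P w n)
            {v. cmod (X_stat k u v / complex_of_real (real n * (\<tau> - 1) + real (length w))) > \<epsilon>})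
          \<longlonglongrightarrow> 0"
proof -
  note avg = assms(1) and \<tau>1 = assms(2) and k1 = assms(3) and kw = assms(4)
    and lamne = assms(6) and ev = assms(7)
  have fin: "\<And>a. finite (set_pmf (P a))" and ne: "\<And>a. [] \<notin> set_pmf (P a)"
    using avg by (auto simp: avg_mutation_law_def mutation_law_def)
  have el: "\<And>a. (\<Sum>\<eta>\<in>set_pmf (P a). pmf (P a) \<eta> * real (length \<eta>)) = \<tau>"
    by (rule exp_len[OF avg])
  define N where "N = card (words k :: 'a list set)"
  define e where "e = (word_enum k :: nat \<Rightarrow> 'a list)"
  have bij: "bij_betw e {..<N} (words k)" unfolding e_def N_def by (rule word_enum_bij)
  have dA: "dim_col (subst_matrix P k) = N" "dim_row (subst_matrix P k) = N"
    by (simp_all add: subst_matrix_def N_def)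
  have uc: "u \<in> carrier_vec N" and un0: "u \<noteq> 0\<^sub>v N"
    using ev dA by (auto simp: left_eigenvector_def eigenvector_def)
  have du: "dim_vec u = N" using uc by simp
  define U :: "'a list \<Rightarrow> complex" where "U = Uf k u"
  have eig: "\<And>y. y \<in> words k \<Longrightarrow> GG k P U y = lam * U y"
    unfolding U_def by (rule eig_GG[OF k1 ne ev])
  obtain j where j: "j < N" and uj: "u $ j \<noteq> 0"
  proof -
    have "\<exists>j<N. u $ j \<noteq> 0"
    proof (rule ccontr)
      assume "\<not> (\<exists>j<N. u $ j \<noteq> 0)"
      then have "u = 0\<^sub>v N" using du by (intro eq_vecI) auto
      then show False using un0 by simp
    qed
    then show ?thesis using that by blast
  qed
  define B where "B = Max ((\<lambda>i. cmod (u $ i)) ` {..<N})"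
  have finB: "finite ((\<lambda>i. cmod (u $ i)) ` {..<N})" by simp
  have neB: "(\<lambda>i. cmod (u $ i)) ` {..<N} \<noteq> {}" using j by auto
  have Bge: "cmod (u $ i) \<le> B" if "i < N" for i
    unfolding B_def using that by (intro Max_ge finB) auto
  obtain i0 where i0: "i0 < N" and Bi0: "cmod (u $ i0) = B"
    using Max_in[OF finB neB] unfolding B_def[symmetric] by auto
  have Bpos: "B > 0" using Bge[OF j] uj by (metis zero_less_norm_iff order_less_le_trans)
  have ub: "\<And>x. cmod (U x) \<le> B"
  proof -
    fix x
    show "cmod (U x) \<le> B"
    proof (cases "x \<in> words k")
      case True
      have "inv_into {..<N} e x \<in> {..<N}"
      proof -
        have "x \<in> e ` {..<N}" using bij True by (simp add: bij_betw_def)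
        then show ?thesis by (rule inv_into_into)
      qed
      then show ?thesis using True Bge by (simp add: U_def Uf_def N_def[symmetric] e_def[symmetric])
    next
      case False
      then show ?thesis using Bpos by (simp add: U_def Uf_def)
    qed
  qed
  define \<rho> where "\<rho> = \<tau> + real k - 1"
  have relam: "Re lam < \<rho>"
  proof -
    have y0: "e i0 \<in> words k" using bij i0 by (auto dest: bij_betwE)
    have Uy0: "U (e i0) = u $ i0" unfolding U_def e_def using Uf_enum[of i0 k u] i0 by (simp add: N_def)
    have "cmod (GG k P U (e i0)) \<le> B * \<rho>" unfolding \<rho>_def by (rule GG_bound[OF fin el ub k1])
    then have "cmod (lam * U (e i0)) \<le> B * \<rho>" using eig[OF y0] by simp
    moreover have "cmod (U (e i0)) = B" using Uy0 Bi0 by simp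
    ultimately show ?thesis using Re_lt Bpos lamne unfolding \<rho>_def by blast
  qed
  define Dn where "Dn = Max (\<Union>a. length ` set_pmf (P a))"
  have finD: "finite (\<Union>a. length ` set_pmf (P a))" using fin by auto
  have lenD: "\<And>a \<eta>. \<eta> \<in> set_pmf (P a) \<Longrightarrow> length \<eta> \<le> Dn"
    unfolding Dn_def using finD by (intro Max_ge) auto
  define D where "D = real Dn"
  have D0: "D \<ge> 0" by (simp add: D_def)
  define \<beta> where "\<beta> = \<tau> - 1"
  define \<delta> where "\<delta> = \<tau> + real k - 1 - Re lam"
  have \<beta>0: "\<beta> > 0" using \<tau>1 by (simp add: \<beta>_def)
  have \<delta>0: "\<delta> > 0" using relam by (simp add: \<delta>_def \<rho>_def)
  define K where "K = 3 * B^2 * (real Dn)^2 + 4 * B * ((real Dn + 2 * real k) * B) * real Dn + ((real Dn + 2 * real k) * B)^2 + 1"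
  define Ac where "Ac = 2 * K * (1 + real Dn) / (\<tau> - 1)"
  define \<mu> where "\<mu> = min (min (2 * \<delta>) (\<beta> / (2 * (1 + D)))) 1"
  have \<mu>0: "\<mu> > 0" using \<delta>0 \<beta>0 D0 by (simp add: \<mu>_def)
  have \<mu>1: "\<mu> \<le> 1" by (simp add: \<mu>_def)
  have \<mu>\<delta>: "\<mu> \<le> 2 * (\<tau> + real k - 1 - Re lam)" by (simp add: \<mu>_def \<delta>_def)
  have \<mu>\<beta>: "\<mu> \<le> (\<tau> - 1) / (2 * (1 + real Dn))" by (simp add: \<mu>_def \<beta>_def D_def)
  have K0: "K \<ge> 0" unfolding K_def using Bpos by simp
  have Ac0: "Ac \<ge> 0" unfolding Ac_def using K0 \<tau>1 by simp
  define \<Phi> where "\<Phi> v = (cmod (FF k U v))^2 / (real (length v))^2 + Ac / real (length v)" for v :: "'a list"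
  have \<Phi>0: "\<Phi> v \<ge> 0" for v unfolding \<Phi>_def using Ac0 by simp
  have one: "measure_pmf.expectation (mut_step P v) \<Phi> \<le> (1 - \<mu> / real (length v)) * \<Phi> v"
    if "k \<le> length v" for v
    unfolding \<Phi>_def
    by (rule one_step[OF k1 that fin ne lenD el eig ub K_def Ac_def \<tau>1 \<mu>\<delta> \<mu>\<beta>])
  define m where "m = length w"
  have m1: "1 \<le> m" using k1 kw by (simp add: m_def)
  have wne: "w \<noteq> []" using m1 by (auto simp: m_def)
  have supp: "finite (set_pmf (mut_system P w n)) \<and>
    (\<forall>v\<in>set_pmf (mut_system P w n). m \<le> length v \<and> length v \<le> m + Dn * n)" for n
    unfolding m_def by (rule mut_system_support[OF fin ne lenD wne])
  define E where "E n = measure_pmf.expectation (mut_system P w n) \<Phi>" for n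
  have Esum: "E n = (\<Sum>v\<in>set_pmf (mut_system P w n). pmf (mut_system P w n) v * \<Phi> v)" for n
    unfolding E_def by (rule exp_finite) (use supp in blast)
  have E0: "E n \<ge> 0" for n unfolding Esum by (intro sum_nonneg mult_nonneg_nonneg) (auto simp: \<Phi>0)
  have rec: "E (Suc n) \<le> (1 - \<mu> / (real m + D * real n)) * E n" for n
  proof -
    let ?S = "set_pmf (mut_system P w n)"
    have fin2: "finite (set_pmf (mut_step P v))" if "v \<in> ?S" for v
    proof -
      have "m \<le> length v" using supp[of n] that by auto
      then have "v \<noteq> []" using m1 by (cases v) auto
      then show ?thesis by (rule finite_mut_step[OF _ fin])
    qed
    have "E (Suc n) = (\<Sum>v\<in>?S. pmf (mut_system P w n) v * measure_pmf.expectation (mut_step P v) \<Phi>)"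
      unfolding E_def by (rule exp_system_Suc) (use supp fin2 in auto)
    also have "\<dots> \<le> (\<Sum>v\<in>?S. pmf (mut_system P w n) v * ((1 - \<mu> / (real m + D * real n)) * \<Phi> v))"
    proof (rule sum_mono, rule mult_left_mono)
      fix v assume v: "v \<in> ?S"
      have lv: "m \<le> length v" "length v \<le> m + Dn * n" using supp[of n] v by auto
      have kv: "k \<le> length v" using lv kw by (simp add: m_def)
      have lp: "0 < length v" using lv m1 by linarith
      then have lpos: "0 < real (length v)" by (simp only: of_nat_0_less_iff)
      have "\<mu> / (real m + D * real n) \<le> \<mu> / real (length v)"
      proof (rule divide_left_mono)
        show "real (length v) \<le> real m + D * real n" using lv(2) by (simp add: D_def flip: of_nat_mult of_nat_add)
      next
        have "0 < real m + D * real n" using m1 D0 by (simp add: add_pos_nonneg)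
        then show "0 < (real m + D * real n) * real (length v)" using lpos by simp
      qed (use \<mu>0 in auto)
      then have "(1 - \<mu> / real (length v)) * \<Phi> v \<le> (1 - \<mu> / (real m + D * real n)) * \<Phi> v"
        by (intro mult_right_mono \<Phi>0) auto
      then show "measure_pmf.expectation (mut_step P v) \<Phi> \<le> (1 - \<mu> / (real m + D * real n)) * \<Phi> v"
        using one[OF kv] by linarith
    qed simp
    also have "\<dots> = (1 - \<mu> / (real m + D * real n)) * E n"
      unfolding Esum by (simp add: sum_distrib_left algebra_simps)
    finally show ?thesis .
  qed
  have Elim: "E \<longlonglongrightarrow> 0"
    by (rule prod_to_zero[OF \<mu>0 \<mu>1 _ D0 E0 rec]) (use m1 in simp)
  show ?thesis
  proof (intro allI impI)
    fix \<epsilon> :: real assume \<epsilon>: "\<epsilon> > 0"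
    define c0 where "c0 = 1 + D / \<beta>"
    have c0: "c0 \<ge> 1" using D0 \<beta>0 by (simp add: c0_def)
    define pr where "pr n = measure_pmf.prob (mut_system P w n)
            {v. cmod (X_stat k u v / complex_of_real (real n * (\<tau> - 1) + real (length w))) > \<epsilon>}" for n
    have bound: "pr n \<le> (c0 / \<epsilon>)^2 * E n" for n
    proof -
      let ?S = "set_pmf (mut_system P w n)"
      let ?A = "{v. cmod (X_stat k u v / complex_of_real (real n * (\<tau> - 1) + real (length w))) > \<epsilon>}"
      define Nn where "Nn = real n * \<beta> + real m"
      have Nn: "Nn > 0" using \<beta>0 m1 by (simp add: Nn_def add_nonneg_pos)
      have finS: "finite ?S" using supp by blast
      have "pr n = measure_pmf.prob (mut_system P w n) (?A \<inter> ?S)"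
        unfolding pr_def by (simp add: measure_Int_set_pmf)
      also have "\<dots> = (\<Sum>v\<in>?A \<inter> ?S. pmf (mut_system P w n) v)"
        by (rule measure_measure_pmf_finite) (use finS in auto)
      also have "\<dots> \<le> (\<Sum>v\<in>?A \<inter> ?S. pmf (mut_system P w n) v * ((c0 / \<epsilon>)^2 * \<Phi> v))"
      proof (rule sum_mono)
        fix v assume v: "v \<in> ?A \<inter> ?S"
        have lv: "m \<le> length v" "length v \<le> m + Dn * n" using supp[of n] v by auto
        have lp: "0 < length v" using lv m1 by linarith
        then have L0: "0 < real (length v)" by (simp only: of_nat_0_less_iff)
        have X: "X_stat k u v = FF k U v" unfolding U_def by (rule X_stat_FF) (simp add: du N_def)
        have eqN: "real n * (\<tau> - 1) + real (length w) = Nn" by (simp add: Nn_def \<beta>_def m_def)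
        have cm: "cmod (X_stat k u v / complex_of_real (real n * (\<tau> - 1) + real (length w))) = cmod (FF k U v) / Nn"
          unfolding eqN X norm_divide norm_of_real using Nn by simp
        have "\<epsilon> < cmod (FF k U v) / Nn"
          using v unfolding cm[symmetric] by simp
        also have "\<dots> \<le> c0 * (cmod (FF k U v) / real (length v))"
        proof -
          have "real (length v) \<le> c0 * Nn"
          proof -
            have "real (length v) \<le> real m + D * real n" using lv(2) by (simp add: D_def flip: of_nat_mult of_nat_add)
            also have "\<dots> \<le> c0 * Nn"
              using \<beta>0 D0 m1 by (simp add: c0_def Nn_def field_simps)
            finally show ?thesis .
          qed
          then have "cmod (FF k U v) * real (length v) \<le> cmod (FF k U v) * (c0 * Nn)"
            by (rule mult_left_mono) simp
          then show ?thesis using Nn L0 by (simp add: field_simps)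
        qed
        finally have lt: "\<epsilon> < c0 * (cmod (FF k U v) / real (length v))" .
        then have "\<epsilon>^2 \<le> (c0 * (cmod (FF k U v) / real (length v)))^2"
          using \<epsilon> by (intro power_mono) auto
        also have "\<dots> = c0^2 * ((cmod (FF k U v))^2 / (real (length v))^2)"
          by (simp add: power_mult_distrib power_divide)
        also have "\<dots> \<le> c0^2 * \<Phi> v"
          unfolding \<Phi>_def using Ac0 L0 by (intro mult_left_mono) auto
        finally have "1 \<le> (c0 / \<epsilon>)^2 * \<Phi> v"
          using \<epsilon> by (simp add: power_divide field_simps)
        then show "pmf (mut_system P w n) v \<le> pmf (mut_system P w n) v * ((c0 / \<epsilon>)^2 * \<Phi> v)"
          using mult_left_mono[of 1 "(c0 / \<epsilon>)^2 * \<Phi> v" "pmf (mut_system P w n) v"] by simp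
      qed
      also have "\<dots> \<le> (\<Sum>v\<in>?S. pmf (mut_system P w n) v * ((c0 / \<epsilon>)^2 * \<Phi> v))"
        by (rule sum_mono2[OF finS]) (auto intro!: mult_nonneg_nonneg \<Phi>0)
      also have "\<dots> = (c0 / \<epsilon>)^2 * E n"
        unfolding Esum by (simp add: sum_distrib_left algebra_simps)
      finally show ?thesis .
    qed
    have "(\<lambda>n. (c0 / \<epsilon>)^2 * E n) \<longlonglongrightarrow> 0"
      using tendsto_mult_right_zero[OF Elim] by simp
    moreover have "\<forall>\<^sub>F n in sequentially. 0 \<le> pr n"
      by (rule always_eventually) (simp add: pr_def)
    moreover have "\<forall>\<^sub>F n in sequentially. pr n \<le> (c0 / \<epsilon>)^2 * E n"
      by (rule always_eventually) (simp add: bound)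
    ultimately have "pr \<longlonglongrightarrow> 0"
      using tendsto_sandwich[of "\<lambda>_. 0" pr sequentially "\<lambda>n. (c0 / \<epsilon>)^2 * E n" 0] by auto
    then show "(\<lambda>n. measure_pmf.prob (mut_system P w n)
            {v. cmod (X_stat k u v / complex_of_real (real n * (\<tau> - 1) + real (length w))) > \<epsilon>}) \<longlonglongrightarrow> 0"
      by (simp only: pr_def[abs_def])
  qed
qed

end
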